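(* Let $\phi=\tilde p/p$ be a degree $(n,1)$ rational inner function as in the context and let $\alpha\in\mathbb{T}$. Then: (i) $B_\alpha$ is a finite Blaschke product; (ii) if $\alpha$ is a generic value for $\phi$, then $B_\alpha$ has degree $n$ and $\mathcal{C}_\alpha=E_\alpha$; (iii) if $\alpha$ is an exceptional value and, after reordering, $\phi^*(\tau_k,\lambda_k)=\alpha$ exactly for $k=1,\dots,\ell$, then $B_\alpha$ has degree $n-\ell$ and $\mathcal{C}_\alpha=E_\alpha\cup L_1\cup\cdots\cup L_\ell$.
   Context: $\mathbb{D}$ is the open unit disk, $\mathbb{T}$ the unit circle. Fix $n\ge1$. Let $p\in\mathbb{C}[z_1,z_2]$ have no zeros on $\mathbb{D}^2$, degree at most $n$ in $z_1$ and at most $1$ in $z_2$; write $p(z)=p_1(z_1)+z_2p_2(z_1)$. Set $\tilde p(z)=z_1^nz_2\overline{p(1/\bar z_1,1/\bar z_2)}=z_2\tilde p_1(z_1)+\tilde p_2(z_1)$ with $\tilde p_i(z)=z^n\overline{p_i(1/\bar z)}$. Assume $\tilde p$ has degree exactly $(n,1)$ and $p,\tilde p$ have no common factor, so $\phi=\tilde p/p$ is a degree $(n,1)$ rational inner function. The zeros of $p$ on $\mathbb{T}^2$ are distinct points $(\tau_1,\lambda_1),\dots,(\tau_m,\lambda_m)$; the non-tangential limit $\phi^*$ exists and is unimodular at every point of $\mathbb{T}^2$. $\alpha\in\mathbb{T}$ is exceptional if $\phi^*(\tau_k,\lambda_k)=\alpha$ for some $k$, generic otherwise. $B_\alpha$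 is the rational function $\frac{\tilde p_1(z)-\alpha p_2(z)}{\alpha p_1(z)-\tilde p_2(z)}$ with common factors cancelled; $E_\alpha=\{(\zeta,\overline{B_\alpha(\zeta)}):\zeta\in\mathbb{T}\}$; $L_k=\{\tau_k\}\times\mathbb{T}$; $\mathcal{C}_\alpha=\{\zeta\in\mathbb{T}^2:\tilde p(\zeta)=\alpha p(\zeta)\}$. *)

theory Defs
  imports "HOL-Analysis.Analysis" "HOL-Computational_Algebra.Computational_Algebra" "HOL-Computational_Algebra.Field_as_Ring"
begin

text \<open>Reflection of a one-variable polynomial of degree at most n:
  refl_poly n q (z) = z^n * conj (q (1 / conj z)).  Coefficient k is conj (coeff q (n - k)).\<close>
definition refl_poly :: "nat \<Rightarrow> complex poly \<Rightarrow> complex poly" where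
  "refl_poly n q = Poly (map cnj (rev (map (coeff q) [0..<Suc n])))"

definition pval :: "complex poly \<Rightarrow> complex poly \<Rightarrow> complex \<times> complex \<Rightarrow> complex" where
  "pval p1 p2 z = poly p1 (fst z) + snd z * poly p2 (fst z)"

definition ptval :: "nat \<Rightarrow> complex poly \<Rightarrow> complex poly \<Rightarrow> complex \<times> complex \<Rightarrow> complex" where
  "ptval n p1 p2 z = snd z * poly (refl_poly n p1) (fst z) + poly (refl_poly n p2) (fst z)"

definition bipoly :: "complex poly \<Rightarrow> complex poly \<Rightarrow> complex poly poly" where
  "bipoly p1 p2 = [:p1, p2:]"

definition bipoly_tilde :: "nat \<Rightarrow> complex poly \<Rightarrow> complex poly \<Rightarrow> complex poly poly" where
  "bipoly_tilde n p1 p2 = [:refl_poly n p2, refl_poly n p1:]"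

definition phi :: "nat \<Rightarrow> complex poly \<Rightarrow> complex poly \<Rightarrow> complex \<times> complex \<Rightarrow> complex" where
  "phi n p1 p2 z = ptval n p1 p2 z / pval p1 p2 z"

definition circle :: "complex set" where "circle = {z. cmod z = 1}"
definition disc :: "complex set" where "disc = {z. cmod z < 1}"

definition nt_region :: "real \<Rightarrow> complex \<times> complex \<Rightarrow> (complex \<times> complex) set" where
  "nt_region c \<zeta> = {z. fst z \<in> disc \<and> snd z \<in> disc \<and>
      cmod (fst \<zeta> - fst z) < c * (1 - cmod (fst z)) \<and>
      cmod (snd \<zeta> - snd z) < c * (1 - cmod (snd z))}"

definition has_nt_limit :: "(complex \<times> complex \<Rightarrow> complex) \<Rightarrow> complex \<times> complex \<Rightarrow> complex \<Rightarrow> bool" where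
  "has_nt_limit f \<zeta> L \<longleftrightarrow> (\<forall>c>1. (f \<longlongrightarrow> L) (at \<zeta> within nt_region c \<zeta>))"

definition nt_lim :: "(complex \<times> complex \<Rightarrow> complex) \<Rightarrow> complex \<times> complex \<Rightarrow> complex" where
  "nt_lim f \<zeta> = (THE L. has_nt_limit f \<zeta> L)"

definition torus_zeros :: "complex poly \<Rightarrow> complex poly \<Rightarrow> (complex \<times> complex) set" where
  "torus_zeros p1 p2 = {z. fst z \<in> circle \<and> snd z \<in> circle \<and> pval p1 p2 z = 0}"

definition exc_points :: "nat \<Rightarrow> complex poly \<Rightarrow> complex poly \<Rightarrow> complex \<Rightarrow> (complex \<times> complex) set" where
  "exc_points n p1 p2 \<alpha> = {\<zeta> \<in> torus_zeros p1 p2. nt_lim (phi n p1 p2) \<zeta> = \<alpha>}"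

definition exceptional :: "nat \<Rightarrow> complex poly \<Rightarrow> complex poly \<Rightarrow> complex \<Rightarrow> bool" where
  "exceptional n p1 p2 \<alpha> \<longleftrightarrow> exc_points n p1 p2 \<alpha> \<noteq> {}"

definition B_num0 :: "nat \<Rightarrow> complex poly \<Rightarrow> complex poly \<Rightarrow> complex \<Rightarrow> complex poly" where
  "B_num0 n p1 p2 \<alpha> = refl_poly n p1 - smult \<alpha> p2"
definition B_den0 :: "nat \<Rightarrow> complex poly \<Rightarrow> complex poly \<Rightarrow> complex \<Rightarrow> complex poly" where
  "B_den0 n p1 p2 \<alpha> = smult \<alpha> p1 - refl_poly n p2"
definition B_num :: "nat \<Rightarrow> complex poly \<Rightarrow> complex poly \<Rightarrow> complex \<Rightarrow> complex poly" where
  "B_num n p1 p2 \<alpha> = B_num0 n p1 p2 \<alpha> div gcd (B_num0 n p1 p2 \<alpha>) (B_den0 n p1 p2 \<alpha>)"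
definition B_den :: "nat \<Rightarrow> complex poly \<Rightarrow> complex poly \<Rightarrow> complex \<Rightarrow> complex poly" where
  "B_den n p1 p2 \<alpha> = B_den0 n p1 p2 \<alpha> div gcd (B_num0 n p1 p2 \<alpha>) (B_den0 n p1 p2 \<alpha>)"

definition B_fun :: "nat \<Rightarrow> complex poly \<Rightarrow> complex poly \<Rightarrow> complex \<Rightarrow> complex \<Rightarrow> complex" where
  "B_fun n p1 p2 \<alpha> z = poly (B_num n p1 p2 \<alpha>) z / poly (B_den n p1 p2 \<alpha>) z"

definition fbp_of_degree :: "complex poly \<Rightarrow> complex poly \<Rightarrow> nat \<Rightarrow> bool" where
  "fbp_of_degree N D d \<longleftrightarrow> D \<noteq> 0 \<and> (\<exists>c as. cmod c = 1 \<and> length as = d \<and> (\<forall>a\<in>set as. cmod a < 1) \<and>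
     (\<forall>z. poly D z \<noteq> 0 \<and> (\<forall>a\<in>set as. 1 - cnj a * z \<noteq> 0) \<longrightarrow>
        poly N z / poly D z = c * (\<Prod>a\<leftarrow>as. (z - a) / (1 - cnj a * z))))"

definition is_fbp :: "complex poly \<Rightarrow> complex poly \<Rightarrow> bool" where
  "is_fbp N D \<longleftrightarrow> (\<exists>d. fbp_of_degree N D d)"

definition E_set :: "nat \<Rightarrow> complex poly \<Rightarrow> complex poly \<Rightarrow> complex \<Rightarrow> (complex \<times> complex) set" where
  "E_set n p1 p2 \<alpha> = {(\<zeta>, cnj (B_fun n p1 p2 \<alpha> \<zeta>)) | \<zeta>. \<zeta> \<in> circle}"

definition C_set :: "nat \<Rightarrow> complex poly \<Rightarrow> complex poly \<Rightarrow> complex \<Rightarrow> (complex \<times> complex) set" where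
  "C_set n p1 p2 \<alpha> = {z. fst z \<in> circle \<and> snd z \<in> circle \<and> ptval n p1 p2 z = \<alpha> * pval p1 p2 z}"

definition line_set :: "complex \<Rightarrow> (complex \<times> complex) set" where
  "line_set \<tau> = {\<tau>} \<times> circle"

end

theory Submission
  imports Defs "HOL-Complex_Analysis.Complex_Analysis"
begin


lemma coeff_refl: "coeff (refl_poly n q) k = (if k \<le> n then cnj (coeff q (n - k)) else 0)"
  unfolding refl_poly_def coeff_Poly_eq nth_default_def by (simp add: rev_nth del: upt_Suc)

lemma degree_refl: "degree (refl_poly n q) \<le> n"
  by (rule degree_le) (auto simp: coeff_refl)

lemma poly_sum_le: fixes p :: "complex poly" assumes "degree p \<le> m" shows "poly p x = (\<Sum>i\<le>m. coeff p i * x ^ i)"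
proof -
  have "(\<Sum>i\<le>degree p. coeff p i * x ^ i) = (\<Sum>i\<le>m. coeff p i * x ^ i)"
    by (rule sum.mono_neutral_left) (use assms in \<open>auto simp: coeff_eq_0\<close>)
  thus ?thesis by (simp add: poly_altdef)
qed

lemma poly_refl:
  assumes "degree q \<le> n" "z \<noteq> 0"
  shows "poly (refl_poly n q) z = z ^ n * cnj (poly q (1 / cnj z))"
proof -
  have "poly (refl_poly n q) z = (\<Sum>k\<le>n. cnj (coeff q (n - k)) * z ^ k)"
    by (subst poly_sum_le[OF degree_refl]) (auto simp: coeff_refl intro: sum.cong)
  also have "\<dots> = (\<Sum>j\<le>n. cnj (coeff q j) * z ^ (n - j))"
    by (rule sum.reindex_bij_witness[where i="\<lambda>j. n - j" and j="\<lambda>k. n - k"]) auto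
  also have "\<dots> = z ^ n * (\<Sum>j\<le>n. cnj (coeff q j) * (1 / z) ^ j)"
    unfolding sum_distrib_left
    by (rule sum.cong) (auto simp: power_diff assms(2) field_simps)
  also have "(\<Sum>j\<le>n. cnj (coeff q j) * (1 / z) ^ j) = cnj (poly q (1 / cnj z))"
    by (subst poly_sum_le[OF assms(1)]) (simp add: )
  finally show ?thesis .
qed

lemma poly_eq_nonzero:
  fixes P Q :: "complex poly"
  assumes "\<And>z. z \<noteq> 0 \<Longrightarrow> poly P z = poly Q z"
  shows "P = Q"
proof (rule ccontr)
  assume "P \<noteq> Q"
  hence "P - Q \<noteq> 0" by simp
  hence "finite {z. poly (P - Q) z = 0}" by (rule poly_roots_finite)
  moreover have "{z. z \<noteq> (0::complex)} \<subseteq> {z. poly (P - Q) z = 0}" using assms by auto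
  moreover have "infinite {z. z \<noteq> (0::complex)}"
  proof
    assume "finite {z. z \<noteq> (0::complex)}"
    hence "finite (insert 0 {z. z \<noteq> (0::complex)})" by simp
    also have "insert 0 {z. z \<noteq> (0::complex)} = UNIV" by auto
    finally show False using infinite_UNIV_char_0[where 'a=complex] by simp
  qed
  ultimately show False using finite_subset by blast
qed

lemma refl_refl: "degree q \<le> n \<Longrightarrow> refl_poly n (refl_poly n q) = q"
  by (rule poly_eqI) (auto simp: coeff_refl coeff_eq_0)

lemma refl_diff: "refl_poly n (a - b) = refl_poly n a - refl_poly n b"
  by (rule poly_eqI) (auto simp: coeff_refl)

lemma refl_add: "refl_poly n (a + b) = refl_poly n a + refl_poly n b"
  by (rule poly_eqI) (auto simp: coeff_refl)

lemma refl_smult: "refl_poly n (smult c a) = smult (cnj c) (refl_poly n a)"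
  by (rule poly_eqI) (auto simp: coeff_refl)

lemma refl_mult:
  assumes "degree A \<le> m" "degree B \<le> k"
  shows "refl_poly (m + k) (A * B) = refl_poly m A * refl_poly k B"
proof (rule poly_eq_nonzero)
  fix z :: complex assume z: "z \<noteq> 0"
  have "degree (A * B) \<le> m + k" using assms degree_mult_le[of A B] by linarith
  thus "poly (refl_poly (m + k) (A * B)) z = poly (refl_poly m A * refl_poly k B) z"
    by (simp add: poly_refl assms z power_add)
qed

lemma refl_circle:
  assumes "degree q \<le> n" "cmod z = 1"
  shows "poly (refl_poly n q) z = z ^ n * cnj (poly q z)"
proof -
  have z: "z \<noteq> 0" using assms by auto
  have "z * cnj z = 1" using assms(2) complex_norm_square[of z] by simp
  hence "1 / cnj z = z" using z by (simp add: field_simps)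
  thus ?thesis using poly_refl[OF assms(1) z] by simp
qed

lemma refl_linear: "refl_poly 1 [:-a, 1:] = [:1, - cnj a:]"
  by (rule poly_eqI) (auto simp: coeff_refl coeff_pCons split: nat.splits)

lemma refl_const: "refl_poly n [:c:] = monom (cnj c) n"
  by (rule poly_eqI) (auto simp: coeff_refl coeff_pCons split: nat.splits)



lemma unit_pp_deg: "is_unit (q :: complex poly poly) \<Longrightarrow> degree q = 0 \<and> degree (coeff q 0) = 0"
proof -
  assume "is_unit q"
  then obtain c where c: "q = [:c:]" "is_unit c" by (auto simp: is_unit_poly_iff)
  hence "c \<noteq> 0" by auto
  with c show ?thesis by (simp add: is_unit_iff_degree)
qed

lemma pp_dvd: "[:[:c:]:] * [:a, b:] = [:smult c a, smult c b:]"
  by simp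

lemma disc_limit_ge:
  fixes f g :: "complex \<Rightarrow> real"
  assumes "\<And>w. cmod w < 1 \<Longrightarrow> f w \<le> g w" "cmod z \<le> 1" "isCont f z" "isCont g z"
  shows "f z \<le> g z"
proof -
  have l0: "((\<lambda>t::real. of_real t * z) \<longlongrightarrow> z) (at_left 1)"
    using tendsto_mult[OF tendsto_of_real[OF tendsto_ident_at[of 1 "{..<1}"]] tendsto_const[of z]] by simp
  have lim: "((\<lambda>t. g (of_real t * z) - f (of_real t * z)) \<longlongrightarrow> g z - f z) (at_left 1)"
    by (rule tendsto_diff; rule isCont_tendsto_compose[OF _ l0]) (use assms in auto)
  have ev: "eventually (\<lambda>t. 0 \<le> g (of_real t * z) - f (of_real t * z)) (at_left (1::real))"
    using eventually_at_left_real[of 0 "1::real", OF zero_less_one]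
  proof (rule eventually_mono)
    fix t :: real assume "t \<in> {0<..<1}"
    hence "cmod (of_real t * z) \<le> t" using assms(2)
      by (simp add: norm_mult mult_left_le)
    hence "cmod (of_real t * z) < 1" using \<open>t \<in> {0<..<1}\<close> by simp
    thus "0 \<le> g (of_real t * z) - f (of_real t * z)" using assms(1) by fastforce
  qed
  have "0 \<le> g z - f z"
    by (rule tendsto_lowerbound[OF lim ev]) simp
  thus ?thesis by simp
qed

locale rif =
  fixes n :: nat and p1 p2 :: "complex poly"
  assumes n: "n \<ge> 1" and deg1: "degree p1 \<le> n" and deg2: "degree p2 \<le> n"
    and no_zeros: "\<And>z1 z2. cmod z1 < 1 \<Longrightarrow> cmod z2 < 1 \<Longrightarrow> pval p1 p2 (z1, z2) \<noteq> 0"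
    and T1nz: "refl_poly n p1 \<noteq> 0"
    and coprime: "\<And>q. q dvd bipoly p1 p2 \<Longrightarrow> q dvd bipoly_tilde n p1 p2 \<Longrightarrow> is_unit q"
begin

abbreviation "T1 \<equiv> refl_poly n p1"
abbreviation "T2 \<equiv> refl_poly n p2"

lemma p1_disc: "cmod z < 1 \<Longrightarrow> poly p1 z \<noteq> 0"
  using no_zeros[of z 0] by (simp add: pval_def)

lemma p2_le_disc: "cmod z < 1 \<Longrightarrow> cmod (poly p2 z) \<le> cmod (poly p1 z)"
proof (rule ccontr)
  assume z: "cmod z < 1" and "\<not> cmod (poly p2 z) \<le> cmod (poly p1 z)"
  hence lt: "cmod (poly p1 z) < cmod (poly p2 z)" by simp
  hence nz: "poly p2 z \<noteq> 0" by auto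
  define w where "w = - poly p1 z / poly p2 z"
  have "cmod w < 1" using lt nz by (simp add: w_def norm_divide divide_less_eq)
  moreover have "pval p1 p2 (z, w) = 0" using nz by (simp add: pval_def w_def)
  ultimately show False using no_zeros z by blast
qed

lemma p2_le_closed: "cmod z \<le> 1 \<Longrightarrow> cmod (poly p2 z) \<le> cmod (poly p1 z)"
  by (rule disc_limit_ge[where f="\<lambda>w. cmod (poly p2 w)" and g="\<lambda>w. cmod (poly p1 w)"])
     (auto intro!: p2_le_disc continuous_intros)

lemma no_common_circle:
  assumes "cmod \<tau> = 1" "poly p1 \<tau> = 0" "poly p2 \<tau> = 0"
  shows False
proof -
  have t1: "poly T1 \<tau> = 0" "poly T2 \<tau> = 0"
    using assms by (simp_all add: refl_circle deg1 deg2)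
  define r where "r = [:-\<tau>, 1:]"
  obtain a where a: "p1 = r * a" using assms(2) by (auto simp: r_def poly_eq_0_iff_dvd)
  obtain b where b: "p2 = r * b" using assms(3) by (auto simp: r_def poly_eq_0_iff_dvd)
  obtain c where c: "T1 = r * c" using t1(1) by (auto simp: r_def poly_eq_0_iff_dvd)
  obtain d where d: "T2 = r * d" using t1(2) by (auto simp: r_def poly_eq_0_iff_dvd)
  have "[:r:] dvd bipoly p1 p2"
    unfolding bipoly_def a b by (rule dvdI[of _ _ "[:a, b:]"]) simp
  moreover have "[:r:] dvd bipoly_tilde n p1 p2"
    unfolding bipoly_tilde_def c d by (rule dvdI[of _ _ "[:d, c:]"]) simp
  ultimately have "is_unit [:r:]" by (rule coprime)
  thus False using unit_pp_deg[of "[:r:]"] by (simp add: r_def)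
qed

lemma p1_closed: "cmod z \<le> 1 \<Longrightarrow> poly p1 z \<noteq> 0"
proof
  assume z: "cmod z \<le> 1" and "poly p1 z = 0"
  show False
  proof (cases "cmod z < 1")
    case True thus False using p1_disc \<open>poly p1 z = 0\<close> by auto
  next
    case False
    hence "cmod z = 1" using z by auto
    moreover have "poly p2 z = 0" using p2_le_closed[OF z] \<open>poly p1 z = 0\<close> by simp
    ultimately show False using no_common_circle \<open>poly p1 z = 0\<close> by blast
  qed
qed

lemma T2_le_disc:
  assumes "cmod z < 1"
  shows "cmod (poly T2 z) \<le> cmod (poly p1 z)"
proof -
  define h where "h = (\<lambda>w. poly T2 w / poly p1 w)"
  have hol: "h holomorphic_on interior (cball 0 1)" unfolding h_def
    by (intro holomorphic_intros) (auto dest: p1_disc)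
  have con: "continuous_on (closure (cball 0 1)) h" unfolding h_def
    by (intro continuous_intros) (auto dest: p1_closed)
  have fr: "norm (h w) \<le> 1" if "w \<in> frontier (cball 0 1)" for w
  proof -
    have w: "cmod w = 1" using that by simp
    have "cmod (poly T2 w) = cmod (poly p2 w)" by (simp add: refl_circle deg2 w norm_mult norm_power)
    also have "\<dots> \<le> cmod (poly p1 w)" using p2_le_closed w by simp
    finally show "norm (h w) \<le> 1" using p1_closed[of w] w
      by (simp add: h_def norm_divide divide_le_eq)
  qed
  have "norm (h z) \<le> 1"
    by (rule maximum_modulus_frontier[of h "cball 0 1" 1 z, OF hol con _ fr]) (use assms in auto)
  thus ?thesis using p1_disc[OF assms] by (simp add: h_def norm_divide divide_le_eq)
qed

end


lemma infinite_ball01: "infinite (ball (0::complex) 1)"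
  using islimpt_eq_infinite_ball[of "0::complex" UNIV] by (simp add: islimpt_UNIV)

lemma poly_zero_on_ball: 
  fixes P :: "complex poly"
  assumes "\<And>w. cmod w < 1 \<Longrightarrow> poly P w = 0" shows "P = 0"
proof (rule ccontr)
  assume "P \<noteq> 0"
  hence "finite {w. poly P w = 0}" by (rule poly_roots_finite)
  moreover have "ball 0 1 \<subseteq> {w. poly P w = 0}" using assms by auto
  ultimately show False using infinite_ball01 finite_subset by blast
qed

lemma norm_diff_sq: "cmod (a - d) ^ 2 = cmod a ^ 2 - 2 * Re (cnj a * d) + cmod d ^ 2"
  by (simp only: cmod_power2) (simp add: power2_eq_square algebra_simps)

lemma refl_zero: "refl_poly n 0 = 0"
  by (rule poly_eqI) (simp add: coeff_refl)

context rif begin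

abbreviation "N0 \<alpha> \<equiv> B_num0 n p1 p2 \<alpha>"
abbreviation "D0 \<alpha> \<equiv> B_den0 n p1 p2 \<alpha>"

lemma deg_D0: "degree (D0 \<alpha>) \<le> n"
  unfolding B_den0_def
  using degree_diff_le[of "smult \<alpha> p1" n T2] degree_smult_le[of \<alpha> p1] deg1 degree_refl[of n p2]
  by linarith

lemma deg_N0: "degree (N0 \<alpha>) \<le> n"
  unfolding B_num0_def
  using degree_diff_le[of T1 n "smult \<alpha> p2"] degree_smult_le[of \<alpha> p2] deg2 degree_refl[of n p1]
  by linarith

lemma unimod: "cmod \<alpha> = 1 \<Longrightarrow> \<alpha> * cnj \<alpha> = 1"
  using complex_norm_square[of \<alpha>] by simp

lemma N0_refl: assumes "cmod \<alpha> = 1" shows "N0 \<alpha> = smult \<alpha> (refl_poly n (D0 \<alpha>))"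
proof -
  have h: "refl_poly n (D0 \<alpha>) = smult (cnj \<alpha>) T1 - p2"
    by (simp add: B_den0_def refl_diff refl_smult refl_refl deg2)
  have "smult \<alpha> (refl_poly n (D0 \<alpha>)) = smult (\<alpha> * cnj \<alpha>) T1 - smult \<alpha> p2"
    by (simp add: h smult_diff_right)
  thus ?thesis using unimod[OF assms] by (simp add: B_num0_def)
qed

lemma N0_D0_circle:
  assumes "cmod \<alpha> = 1" "cmod z = 1"
  shows "cmod (poly (N0 \<alpha>) z) = cmod (poly (D0 \<alpha>) z)"
  using assms by (simp add: N0_refl refl_circle deg_D0 norm_mult norm_power)

lemma D0_pos:
  assumes "cmod \<alpha> = 1" "cmod z < 1"
  shows "cmod (poly (D0 \<alpha>) z) ^ 2 \<le> 2 * Re (cnj (\<alpha> * poly p1 z) * poly (D0 \<alpha>) z)"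
proof -
  have "\<alpha> * poly p1 z - poly (D0 \<alpha>) z = poly T2 z" by (simp add: B_den0_def)
  hence "cmod (\<alpha> * poly p1 z - poly (D0 \<alpha>) z) \<le> cmod (\<alpha> * poly p1 z)"
    using T2_le_disc[OF assms(2)] assms(1) by (simp add: norm_mult)
  hence "cmod (\<alpha> * poly p1 z - poly (D0 \<alpha>) z) ^ 2 \<le> cmod (\<alpha> * poly p1 z) ^ 2"
    by (simp add: power_mono)
  thus ?thesis unfolding norm_diff_sq by linarith
qed

lemma not_both_zero:
  assumes "cmod \<alpha> = 1" "N0 \<alpha> = 0" "D0 \<alpha> = 0"
  shows False
proof -
  have a: "T1 = smult \<alpha> p2" "T2 = smult \<alpha> p1" using assms by (simp_all add: B_num0_def B_den0_def)
  have "bipoly_tilde n p1 p2 = [:[:\<alpha>:]:] * bipoly p1 p2"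
    by (simp add: bipoly_def bipoly_tilde_def a)
  hence "bipoly p1 p2 dvd bipoly_tilde n p1 p2" by (simp add: dvd_smult)
  hence "is_unit (bipoly p1 p2)" by (rule coprime[OF dvd_refl])
  hence "degree (bipoly p1 p2) = 0" using unit_pp_deg by blast
  hence "p2 = 0" by (auto simp: bipoly_def degree_pCons_eq_if split: if_splits)
  thus False using a T1nz by simp
qed

lemma D0_nz: assumes "cmod \<alpha> = 1" shows "D0 \<alpha> \<noteq> 0"
proof
  assume "D0 \<alpha> = 0"
  hence "N0 \<alpha> = 0" using N0_refl[OF assms] by (simp add: refl_zero)
  thus False using not_both_zero assms \<open>D0 \<alpha> = 0\<close> by blast
qed

lemma D0_disc:
  assumes "cmod \<alpha> = 1" "cmod z < 1"
  shows "poly (D0 \<alpha>) z \<noteq> 0"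
proof
  assume z0: "poly (D0 \<alpha>) z = 0"
  define f where "f = (\<lambda>w. poly T2 w / (\<alpha> * poly p1 w))"
  have a0: "\<alpha> \<noteq> 0" using assms by auto
  have e: "poly T2 z = \<alpha> * poly p1 z" using z0 by (simp add: B_den0_def)
  have fz: "f z = 1" using e p1_disc[OF assms(2)] a0 by (simp add: f_def)
  have le: "norm (f w) \<le> norm (f z)" if "w \<in> ball 0 1" for w
    using T2_le_disc[of w] p1_disc[of w] that assms(1) fz
    by (simp add: f_def norm_divide norm_mult divide_le_eq)
  have hol: "f holomorphic_on ball 0 1" unfolding f_def
    by (intro holomorphic_intros) (use a0 in \<open>auto dest: p1_disc\<close>)
  have zb: "z \<in> ball 0 1" using assms by simp
  have "f constant_on ball 0 1"
    by (rule maximum_modulus_principle[of f "ball 0 1" "ball 0 1" z, OF hol _ _ _ _ zb le]) auto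
  then obtain c where c: "\<And>w. w \<in> ball 0 1 \<Longrightarrow> f w = c" by (auto simp: constant_on_def)
  have "D0 \<alpha> = 0"
  proof (rule poly_zero_on_ball)
    fix w :: complex assume w: "cmod w < 1"
    have "f w = 1" using c[of w] c[of z] w assms fz by simp
    thus "poly (D0 \<alpha>) w = 0" using p1_disc[OF w] a0 by (simp add: f_def B_den0_def field_simps)
  qed
  thus False using D0_nz assms by blast
qed

end


lemma halfplane_from_disc:
  fixes G :: "complex \<Rightarrow> complex" and k :: nat
  assumes t1: "cmod \<tau> = 1" and cont: "isCont G \<tau>"
    and pos: "\<And>z. cmod z < 1 \<Longrightarrow> 0 \<le> Re (G z * (z - \<tau>) ^ k)"
    and w: "Re w > 0"
  shows "0 \<le> Re (G \<tau> * (-\<tau>) ^ k * w ^ k)"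
proof -
  define z where "z = (\<lambda>t::real. \<tau> - of_real t * \<tau> * w)"
  have w0: "w \<noteq> 0" using w by auto
  hence nw: "cmod w ^ 2 > 0" by simp
  define b where "b = 2 * Re w / cmod w ^ 2"
  have b: "b > 0" using w nw by (simp add: b_def)
  have lz: "(z \<longlongrightarrow> \<tau>) (at_right 0)"
  proof -
    have "((\<lambda>t::real. \<tau> - of_real t * \<tau> * w) \<longlongrightarrow> \<tau> - of_real 0 * \<tau> * w) (at_right 0)"
      by (intro tendsto_intros)
    thus ?thesis by (simp add: z_def)
  qed
  have lim: "((\<lambda>t. Re (G (z t) * (-\<tau>) ^ k * w ^ k)) \<longlongrightarrow> Re (G \<tau> * (-\<tau>) ^ k * w ^ k)) (at_right 0)"
    by (intro tendsto_intros isCont_tendsto_compose[OF cont lz])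
  have ev: "eventually (\<lambda>t. 0 \<le> Re (G (z t) * (-\<tau>) ^ k * w ^ k)) (at_right (0::real))"
    using eventually_at_right_real[OF b]
  proof (rule eventually_mono)
    fix t :: real assume t: "t \<in> {0<..<b}"
    have zt: "z t = \<tau> * (1 - of_real t * w)" by (simp add: z_def algebra_simps)
    have "cmod (1 - of_real t * w) ^ 2 = 1 - 2 * t * Re w + t ^ 2 * cmod w ^ 2"
      by (simp add: norm_diff_sq norm_mult power_mult_distrib)
    also have "\<dots> < 1"
    proof -
      have "t * cmod w ^ 2 < 2 * Re w" using t nw by (simp add: b_def pos_less_divide_eq)
      hence "t * (t * cmod w ^ 2) < t * (2 * Re w)" using t by simp
      thus ?thesis by (simp add: power2_eq_square algebra_simps)
    qed
    finally have "cmod (1 - of_real t * w) < 1"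
      by (metis abs_norm_cancel abs_square_less_1)
    hence "cmod (z t) < 1" using t1 by (simp add: zt norm_mult)
    hence "0 \<le> Re (G (z t) * (z t - \<tau>) ^ k)" by (rule pos)
    also have "G (z t) * (z t - \<tau>) ^ k = of_real (t ^ k) * (G (z t) * (-\<tau>) ^ k * w ^ k)"
    proof -
      have "z t - \<tau> = (-\<tau>) * w * of_real t" by (simp add: z_def)
      hence "(z t - \<tau>) ^ k = ((-\<tau>) * w * of_real t) ^ k" by (simp only:)
      also have "\<dots> = (-\<tau>) ^ k * w ^ k * of_real (t ^ k)" by (simp only: power_mult_distrib of_real_power)
      finally have "(z t - \<tau>) ^ k = (-\<tau>) ^ k * w ^ k * of_real (t ^ k)" .
      thus ?thesis by (simp add: algebra_simps)
    qed
    finally have "0 \<le> t ^ k * Re (G (z t) * (-\<tau>) ^ k * w ^ k)" by simp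
    hence "t ^ k * 0 \<le> t ^ k * Re (G (z t) * (-\<tau>) ^ k * w ^ k)" by simp
    moreover have tk: "t ^ k > 0" using t by simp
    ultimately show "0 \<le> Re (G (z t) * (-\<tau>) ^ k * w ^ k)" by (simp only: mult_le_cancel_left_pos[OF tk])
  qed
  show ?thesis by (rule tendsto_lowerbound[OF lim ev]) simp
qed

lemma halfplane_k:
  fixes C :: complex and k :: nat
  assumes C: "C \<noteq> 0" and hp: "\<And>w. Re w > 0 \<Longrightarrow> 0 \<le> Re (C * w ^ k)" and k: "k \<ge> 1"
  shows "k = 1 \<and> Re C > 0 \<and> Im C = 0"
proof (cases "k = 1")
  case True
  have M: "0 \<le> Re C - M * Im C" for M
    using hp[of "1 + \<i> * of_real M"] True by (simp add: mult.commute)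
  have "Im C = 0"
  proof (rule ccontr)
    assume "Im C \<noteq> 0"
    thus False using M[of "(Re C + 1) / Im C"] by (simp add: field_simps)
  qed
  moreover have "Re C \<ge> 0" using M[of 0] by simp
  ultimately show ?thesis using C True by (simp add: complex_eq_iff order_le_less)
next
  case False
  hence k2: "k \<ge> 2" using k by simp
  have key: "0 \<le> Re (C * cis \<phi>)" if "\<bar>\<phi>\<bar> \<le> 3 * pi / 4" for \<phi>
  proof -
    have kr: "real k \<ge> 2" using k2 by simp
    have "\<bar>\<phi> / real k\<bar> \<le> (3 * pi / 4) / 2"
    proof -
      have "3 * pi * 2 \<le> 3 * pi * real k" using kr pi_gt_zero by (intro mult_left_mono) auto
      moreover have "\<bar>\<phi>\<bar> * 8 \<le> 3 * pi * 2" using that by simp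
      ultimately have "\<bar>\<phi>\<bar> * 8 \<le> 3 * pi * real k" by linarith
      thus ?thesis using kr by (simp add: abs_divide divide_le_eq)
    qed
    hence "\<bar>\<phi> / real k\<bar> < pi / 2" using pi_gt_zero by linarith
    hence "- (pi / 2) < \<phi> / real k" "\<phi> / real k < pi / 2" by (simp_all only: abs_less_iff) linarith+
    hence "cos (\<phi> / real k) > 0" by (intro cos_gt_zero_pi)
    hence "Re (cis (\<phi> / real k)) > 0" by simp
    hence "0 \<le> Re (C * cis (\<phi> / real k) ^ k)" by (rule hp)
    also have "cis (\<phi> / real k) ^ k = cis (real k * (\<phi> / real k))" by (rule Complex.DeMoivre)
    also have "real k * (\<phi> / real k) = \<phi>" using k by simp
    finally show ?thesis .
  qed
  define v where "v = cis (- pi / 4)"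
  have e1: "cis (3 * pi / 4) = - v" unfolding v_def minus_cis by (simp add: field_simps)
  have e2: "cis (pi / 4) = \<i> * v" unfolding v_def
    using cis_mult[of "-pi/4" "pi/2"] by (simp add: field_simps)
  have e3: "cis (- (3 * pi / 4)) = - (\<i> * v)" unfolding v_def
    using cis_mult[of "-pi/4" "-(pi/2)"] by (simp add: field_simps)
  have a1: "0 \<le> Re (C * v)" using key[of "-pi/4"] pi_gt_zero by (simp add: v_def)
  have a2: "0 \<le> Re (C * - v)" using key[of "3*pi/4"] pi_gt_zero e1 by simp
  have a3: "0 \<le> Re (C * (\<i> * v))" using key[of "pi/4"] pi_gt_zero e2 by simp
  have a4: "0 \<le> Re (C * - (\<i> * v))" using key[of "-(3*pi/4)"] pi_gt_zero e3 by simp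
  have "Re (C * v) = 0" "Im (C * v) = 0" using a1 a2 a3 a4 by (auto simp: algebra_simps)
  hence "C * v = 0" by (simp add: complex_eq_iff)
  moreover have "v \<noteq> 0" by (simp add: v_def)
  ultimately show ?thesis using C by simp
qed



lemma refl_minus: "refl_poly n (- a) = - refl_poly n a"
  by (rule poly_eqI) (simp add: coeff_refl)

context rif begin

lemma simple_root:
  assumes a: "cmod a = 1"
    and le: "\<And>z. cmod z < 1 \<Longrightarrow> cmod (a * poly p1 z - poly G z) \<le> cmod (poly p1 z)"
    and G: "G \<noteq> 0" and t: "cmod \<tau> = 1" "poly G \<tau> = 0"
  shows "\<exists>G1. G = [:-\<tau>, 1:] * G1 \<and> poly G1 \<tau> \<noteq> 0 \<and>
      Re (cnj (a * poly p1 \<tau>) * poly G1 \<tau> * \<tau>) < 0 \<and> Im (cnj (a * poly p1 \<tau>) * poly G1 \<tau> * \<tau>) = 0"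
proof -
  define k where "k = order \<tau> G"
  have k1: "k \<ge> 1" using t G order_root[of G \<tau>] by (simp add: k_def)
  obtain q where q: "G = [:-\<tau>, 1:] ^ k * q" "\<not> [:-\<tau>, 1:] dvd q"
    using order_decomp[OF G, of \<tau>] by (auto simp: k_def)
  have qt: "poly q \<tau> \<noteq> 0" using q(2) by (simp add: poly_eq_0_iff_dvd)
  define F where "F = (\<lambda>z. cnj (a * poly p1 z) * poly q z)"
  have Gz: "poly G z = (z - \<tau>) ^ k * poly q z" for z by (simp add: q(1) poly_power)
  have pos: "0 \<le> Re (F z * (z - \<tau>) ^ k)" if z: "cmod z < 1" for z
  proof -
    have "cmod (a * poly p1 z - poly G z) ^ 2 \<le> cmod (a * poly p1 z) ^ 2"
      using le[OF z] a by (simp add: norm_mult power_mono)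
    hence "cmod (poly G z) ^ 2 \<le> 2 * Re (cnj (a * poly p1 z) * poly G z)"
      unfolding norm_diff_sq by linarith
    hence "0 \<le> Re (cnj (a * poly p1 z) * poly G z)"
      by (smt (verit) zero_le_power2)
    thus ?thesis by (simp add: F_def Gz algebra_simps)
  qed
  have cont: "isCont F \<tau>" unfolding F_def by (intro continuous_intros)
  have hp: "0 \<le> Re ((F \<tau> * (-\<tau>) ^ k) * w ^ k)" if "Re w > 0" for w
    using halfplane_from_disc[OF t(1) cont pos that] by (simp add: mult.assoc)
  have Fnz: "F \<tau> * (-\<tau>) ^ k \<noteq> 0"
    using p1_closed[of \<tau>] t qt a by (auto simp: F_def)
  have r: "k = 1 \<and> Re (F \<tau> * (-\<tau>) ^ k) > 0 \<and> Im (F \<tau> * (-\<tau>) ^ k) = 0"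
    by (rule halfplane_k[OF Fnz hp k1])
  have k: "k = 1" using r by simp
  have eq: "F \<tau> * (-\<tau>) ^ k = - (F \<tau> * \<tau>)" using k by simp
  have r1: "Re (- (F \<tau> * \<tau>)) > 0" "Im (- (F \<tau> * \<tau>)) = 0" using r[unfolded eq] by auto
  have r2: "Re (F \<tau> * \<tau>) < 0" "Im (F \<tau> * \<tau>) = 0"
    using r1 by (simp_all only: uminus_complex.sel)
  have FF: "cnj (a * poly p1 \<tau>) * poly q \<tau> * \<tau> = F \<tau> * \<tau>" by (simp add: F_def)
  show ?thesis
  proof (intro exI conjI)
    show "G = [:-\<tau>, 1:] * q" using q(1) k by simp
    show "poly q \<tau> \<noteq> 0" by (rule qt)
    show "Re (cnj (a * poly p1 \<tau>) * poly q \<tau> * \<tau>) < 0" using r2 by (simp only: FF)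
    show "Im (cnj (a * poly p1 \<tau>) * poly q \<tau> * \<tau>) = 0" using r2 by (simp only: FF)
  qed
qed

lemma D0_simple:
  assumes "cmod \<alpha> = 1" "cmod \<tau> = 1" "poly (D0 \<alpha>) \<tau> = 0"
  shows "\<exists>D1. D0 \<alpha> = [:-\<tau>, 1:] * D1 \<and> poly D1 \<tau> \<noteq> 0 \<and>
      Re (cnj (\<alpha> * poly p1 \<tau>) * poly D1 \<tau> * \<tau>) < 0 \<and> Im (cnj (\<alpha> * poly p1 \<tau>) * poly D1 \<tau> * \<tau>) = 0"
proof (rule simple_root[OF assms(1) _ D0_nz[OF assms(1)] assms(2,3)])
  fix z :: complex assume "cmod z < 1"
  thus "cmod (\<alpha> * poly p1 z - poly (D0 \<alpha>) z) \<le> cmod (poly p1 z)"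
    using T2_le_disc by (simp add: B_den0_def)
qed

lemma E_nz:
  assumes "cmod lam = 1"
  shows "smult (cnj lam) p1 + p2 \<noteq> 0"
proof
  assume "smult (cnj lam) p1 + p2 = 0"
  hence e: "p2 = - smult (cnj lam) p1" by (simp add: eq_neg_iff_add_eq_0 add.commute)
  have ll: "lam * cnj lam = 1" using unimod[OF assms] .
  have t2: "T2 = - smult lam T1"
    by (simp add: e refl_minus refl_smult)
  define q where "q = [:[:-lam:], [:1:]:]"
  have "bipoly p1 p2 = [:smult (- cnj lam) p1:] * q"
    by (simp add: bipoly_def q_def e ll smult_smult mult.commute)
  hence d1: "q dvd bipoly p1 p2" by (metis dvd_triv_right)
  have "bipoly_tilde n p1 p2 = [:T1:] * q"
    by (simp add: bipoly_tilde_def q_def t2)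
  hence d2: "q dvd bipoly_tilde n p1 p2" by (metis dvd_triv_right)
  have "is_unit q" by (rule coprime[OF d1 d2])
  thus False using unit_pp_deg[of q] by (simp add: q_def)
qed

lemma E_simple:
  assumes "cmod lam = 1" "cmod \<tau> = 1" "poly p1 \<tau> + lam * poly p2 \<tau> = 0"
  shows "\<exists>E1. smult (cnj lam) p1 + p2 = [:-\<tau>, 1:] * E1 \<and> poly E1 \<tau> \<noteq> 0 \<and>
      Re (cnj (cnj lam * poly p1 \<tau>) * poly E1 \<tau> * \<tau>) < 0 \<and> Im (cnj (cnj lam * poly p1 \<tau>) * poly E1 \<tau> * \<tau>) = 0"
proof (rule simple_root[OF _ _ E_nz[OF assms(1)] assms(2)])
  show "cmod (cnj lam) = 1" using assms by simp
  fix z :: complex assume "cmod z < 1"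
  thus "cmod (cnj lam * poly p1 z - poly (smult (cnj lam) p1 + p2) z) \<le> cmod (poly p1 z)"
    using p2_le_disc by simp
next
  have ll: "cnj lam * lam = 1" using unimod[OF assms(1)] by (simp add: mult.commute)
  have "cnj lam * (poly p1 \<tau> + lam * poly p2 \<tau>) = cnj lam * poly p1 \<tau> + (cnj lam * lam) * poly p2 \<tau>"
    by (simp add: algebra_simps)
  hence "poly (smult (cnj lam) p1 + p2) \<tau> = cnj lam * (poly p1 \<tau> + lam * poly p2 \<tau>)"
    by (simp add: ll)
  thus "poly (smult (cnj lam) p1 + p2) \<tau> = 0" using assms(3) by simp
qed

end


definition Pd :: "complex list \<Rightarrow> complex poly" where "Pd as = (\<Prod>a\<leftarrow>as. [:1, - cnj a:])"
definition Qn :: "complex list \<Rightarrow> complex poly" where "Qn as = (\<Prod>a\<leftarrow>as. [:-a, 1:])"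

lemma Pd_simps[simp]: "Pd [] = 1" "Pd (a # as) = [:1, - cnj a:] * Pd as"
  by (simp_all add: Pd_def)
lemma Qn_simps[simp]: "Qn [] = 1" "Qn (a # as) = [:-a, 1:] * Qn as"
  by (simp_all add: Qn_def)

lemma Qn_replicate0: "Qn (replicate m 0) = monom 1 m"
  by (induction m) (auto simp: monom_Suc monom_0 pCons_one)

lemma Pd_replicate0: "Pd (replicate m 0) = 1"
  by (induction m) (auto simp: pCons_one)

lemma unimod1: "cmod a = 1 \<Longrightarrow> a * cnj a = 1"
  using complex_norm_square[of a] by simp

lemma roots_circle_finite: "(D::complex poly) \<noteq> 0 \<Longrightarrow> finite {\<tau>. cmod \<tau> = 1 \<and> poly D \<tau> = 0}"
  by (rule finite_subset[OF _ poly_roots_finite]) auto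

lemma fbp_factor:
  fixes D :: "complex poly"
  assumes "D \<noteq> 0" "degree D \<le> m" "\<forall>z. cmod z < 1 \<longrightarrow> poly D z \<noteq> 0"
    "\<forall>\<tau>. cmod \<tau> = 1 \<longrightarrow> \<not> [:-\<tau>, 1:] ^ 2 dvd D"
  shows "\<exists>c as. cmod c = 1 \<and> length as = m - card {\<tau>. cmod \<tau> = 1 \<and> poly D \<tau> = 0} \<and> (\<forall>a\<in>set as. cmod a < 1) \<and>
    refl_poly m D * Pd as = smult c (Qn as * D)"
  using assms
proof (induction "degree D" arbitrary: D m)
  case 0
  then obtain d where d: "D = [:d:]" by (metis degree_eq_zeroE)
  hence d0: "d \<noteq> 0" using 0 by simp
  have e: "{\<tau>. cmod \<tau> = 1 \<and> poly D \<tau> = 0} = {}" using d d0 by auto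
  have cz: "card {\<tau>. cmod \<tau> = 1 \<and> poly D \<tau> = 0} = 0" by (simp only: e card.empty)
  moreover have "refl_poly m D * Pd (replicate m 0) = smult (cnj d / d) (Qn (replicate m 0) * D)"
    using d0 by (simp add: d refl_const Qn_replicate0 Pd_replicate0 smult_monom)
  moreover have "cmod (cnj d / d) = 1" using d0 by (simp add: norm_divide)
  ultimately show ?case by (intro exI[of _ "cnj d / d"] exI[of _ "replicate m 0"]) (use cz in auto)
next
  case (Suc k)
  have nc: "\<not> constant (poly D)" by (metis constant_degree Suc(2) nat.distinct(1))
  obtain z0 where z0: "poly D z0 = 0" using Fundamental_Theorem_Algebra.fundamental_theorem_of_algebra[OF nc] by (elim exE)
  then have "[:-z0, 1:] dvd D" by (simp add: poly_eq_0_iff_dvd)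
  then obtain D' where D': "D = [:-z0, 1:] * D'" by (rule dvdE)
  have D'nz: "D' \<noteq> 0" using Suc(3) D' by (metis mult_zero_right)
  have "degree D = 1 + degree D'" unfolding D' by (subst degree_mult_eq) (use D'nz in auto)
  hence degD': "degree D' = k" using Suc(2) by simp
  have m1: "m \<ge> 1" using Suc(2,4) by simp
  define m' where "m' = m - 1"
  have mm: "m = 1 + m'" using m1 by (simp add: m'_def)
  have degm: "degree D' \<le> m'" using Suc(2,4) degD' by (simp add: m'_def)
  have disc': "\<forall>z. cmod z < 1 \<longrightarrow> poly D' z \<noteq> 0" using Suc(5) by (auto simp: D')
  have sq': "\<forall>\<tau>. cmod \<tau> = 1 \<longrightarrow> \<not> [:-\<tau>, 1:] ^ 2 dvd D'"
  proof (intro allI impI notI)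
    fix \<tau> :: complex assume t: "cmod \<tau> = 1" "[:-\<tau>, 1:] ^ 2 dvd D'"
    hence "[:-\<tau>, 1:] ^ 2 dvd D" unfolding D' by (intro dvd_mult)
    thus False using Suc(6) t(1) by blast
  qed
  obtain c' as' where IH: "cmod c' = 1" "length as' = m' - card {\<tau>. cmod \<tau> = 1 \<and> poly D' \<tau> = 0}"
      "\<forall>a\<in>set as'. cmod a < 1" "refl_poly m' D' * Pd as' = smult c' (Qn as' * D')"
    using Suc(1)[OF degD'[symmetric] D'nz degm disc' sq'] by blast
  have rD: "refl_poly m D = [:1, - cnj z0:] * refl_poly m' D'"
  proof -
    have "refl_poly (1 + m') ([:-z0, 1:] * D') = refl_poly 1 [:-z0, 1:] * refl_poly m' D'"
      by (rule refl_mult) (simp_all add: degm)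
    thus ?thesis by (simp only: mm[symmetric] D'[symmetric] refl_linear)
  qed
  have z0ge: "cmod z0 \<ge> 1" using Suc(5) z0 by (meson not_le)
  have z00: "z0 \<noteq> 0" using z0ge by auto
  show ?case
  proof (cases "cmod z0 = 1")
    case True
    have zz: "cnj z0 * z0 = 1" using unimod1[OF True] by (simp add: mult.commute)
    have lin: "[:1, - cnj z0:] = smult (- cnj z0) [:-z0, 1:]" using zz by simp
    have nr: "poly D' z0 \<noteq> 0"
    proof
      assume "poly D' z0 = 0"
      hence "[:-z0, 1:] dvd D'" by (simp add: poly_eq_0_iff_dvd)
      hence "[:-z0, 1:] * [:-z0, 1:] dvd [:-z0, 1:] * D'" by (rule mult_dvd_mono[OF dvd_refl])
      hence "[:-z0, 1:] ^ 2 dvd D" by (simp only: D' power2_eq_square)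
      thus False using Suc(6) True by blast
    qed
    have rs: "{\<tau>. cmod \<tau> = 1 \<and> poly D \<tau> = 0} = insert z0 {\<tau>. cmod \<tau> = 1 \<and> poly D' \<tau> = 0}"
      using True by (auto simp: D')
    have card: "card {\<tau>. cmod \<tau> = 1 \<and> poly D \<tau> = 0} = Suc (card {\<tau>. cmod \<tau> = 1 \<and> poly D' \<tau> = 0})"
      unfolding rs using nr roots_circle_finite[OF D'nz] by simp
    have "refl_poly m D * Pd as' = smult (- cnj z0) [:-z0, 1:] * (refl_poly m' D' * Pd as')"
      unfolding rD lin by (simp only: mult.assoc)
    also have "\<dots> = smult (- cnj z0 * c') (Qn as' * D)"
      unfolding IH(4) D' by (rule poly_eq_nonzero) (simp add: algebra_simps)
    finally have eq: "refl_poly m D * Pd as' = smult (- cnj z0 * c') (Qn as' * D)" .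
    have len: "length as' = m - card {\<tau>. cmod \<tau> = 1 \<and> poly D \<tau> = 0}"
      unfolding IH(2) card mm by simp
    have cn: "cmod (- cnj z0 * c') = 1" using IH(1) True by (simp add: norm_mult)
    show ?thesis
      by (intro exI[of _ "- cnj z0 * c'"] exI[of _ as'] conjI len cn eq IH(3))
  next
    case False
    hence zg: "cmod z0 > 1" using z0ge by simp
    define a where "a = 1 / cnj z0"
    have ca: "cmod a < 1" using zg by (simp add: a_def norm_divide divide_less_eq)
    have lin: "[:1, - cnj z0:] * [:1, - cnj a:] = smult (cnj z0 / z0) ([:-a, 1:] * [:-z0, 1:])"
      by (rule poly_eq_nonzero) (use z00 in \<open>simp add: a_def field_simps\<close>)
    have rs: "{\<tau>. cmod \<tau> = 1 \<and> poly D \<tau> = 0} = {\<tau>. cmod \<tau> = 1 \<and> poly D' \<tau> = 0}"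
      using False by (auto simp: D')
    have "refl_poly m D * Pd (a # as') = ([:1, - cnj z0:] * [:1, - cnj a:]) * (refl_poly m' D' * Pd as')"
      unfolding rD by (rule poly_eq_nonzero) (simp add: algebra_simps)
    also have "\<dots> = smult (cnj z0 / z0 * c') (Qn (a # as') * D)"
      unfolding lin IH(4) D' by (rule poly_eq_nonzero) (use z00 in \<open>simp add: field_simps\<close>)
    finally have eq: "refl_poly m D * Pd (a # as') = smult (cnj z0 / z0 * c') (Qn (a # as') * D)" .
    have "cmod (cnj z0 / z0 * c') = 1" using IH(1) z00 by (simp add: norm_mult norm_divide)
    moreover have "length (a # as') = m - card {\<tau>. cmod \<tau> = 1 \<and> poly D \<tau> = 0}"
    proof -
      have "card {\<tau>. cmod \<tau> = 1 \<and> poly D' \<tau> = 0} \<le> card {x. poly D' x = 0}"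
        by (intro card_mono poly_roots_finite D'nz) auto
      also have "\<dots> \<le> degree D'" by (rule card_poly_roots_bound[OF D'nz])
      finally show ?thesis using IH(2) rs mm degm by simp
    qed
    ultimately show ?thesis using IH(3) ca eq
      by (intro exI[of _ "cnj z0 / z0 * c'"] exI[of _ "a # as'"]) auto
  qed
qed



lemma poly_Pd: "poly (Pd as) z = (\<Prod>a\<leftarrow>as. 1 - cnj a * z)"
  by (induction as) (auto simp: algebra_simps)
lemma poly_Qn: "poly (Qn as) z = (\<Prod>a\<leftarrow>as. z - a)"
  by (induction as) (auto simp: algebra_simps)

lemma prod_list_quot: "(\<Prod>a\<leftarrow>as. (f a :: complex) / g a) = (\<Prod>a\<leftarrow>as. f a) / (\<Prod>a\<leftarrow>as. g a)"
  by (induction as) simp_all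

lemma prod_quot: "(\<Prod>a\<leftarrow>as. (z - a) / (1 - cnj a * z)) = poly (Qn as) z / poly (Pd as) z"
  unfolding poly_Pd poly_Qn by (rule prod_list_quot)

lemma circle_factor:
  assumes "cmod z = 1" "cmod a < 1"
  shows "cmod (1 - cnj a * z) = cmod (z - a)" "1 - cnj a * z \<noteq> 0"
proof -
  have zz: "z * cnj z = 1" using unimod1[OF assms(1)] .
  have "1 - cnj a * z = z * cnj (z - a)" using zz by (simp add: algebra_simps)
  thus "cmod (1 - cnj a * z) = cmod (z - a)" using assms(1) by (simp only: norm_mult complex_mod_cnj)
  have "cmod (cnj a * z) < 1" using assms by (simp add: norm_mult)
  thus "1 - cnj a * z \<noteq> 0" by auto
qed

lemma circle_Pd:
  assumes "cmod z = 1" "\<forall>a\<in>set as. cmod a < 1"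
  shows "cmod (poly (Pd as) z) = cmod (poly (Qn as) z)" "poly (Pd as) z \<noteq> 0"
  unfolding poly_Pd poly_Qn using assms by (induction as) (auto simp: norm_mult circle_factor dest: circle_factor(2)[of z])

context rif begin

lemma D0_nosq:
  assumes "cmod \<alpha> = 1"
  shows "\<forall>\<tau>. cmod \<tau> = 1 \<longrightarrow> \<not> [:-\<tau>, 1:] ^ 2 dvd D0 \<alpha>"
proof (intro allI impI notI)
  fix \<tau> :: complex assume t: "cmod \<tau> = 1" and d: "[:-\<tau>, 1:] ^ 2 dvd D0 \<alpha>"
  have "[:-\<tau>, 1:] dvd D0 \<alpha>" using dvd_trans[OF dvd_triv_left[of "[:-\<tau>,1:]" "[:-\<tau>,1:]"] d[unfolded power2_eq_square]] .
  hence "poly (D0 \<alpha>) \<tau> = 0" by (simp add: poly_eq_0_iff_dvd)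
  then obtain D1 where D1: "D0 \<alpha> = [:-\<tau>, 1:] * D1" "poly D1 \<tau> \<noteq> 0"
    using D0_simple[OF assms t] by blast
  have "[:-\<tau>, 1:] * [:-\<tau>, 1:] dvd [:-\<tau>, 1:] * D1" using d[unfolded power2_eq_square D1(1)] .
  hence "[:-\<tau>, 1:] dvd D1" by (subst (asm) dvd_mult_cancel_left) auto
  thus False using D1(2) by (simp add: poly_eq_0_iff_dvd)
qed

definition "RT \<alpha> = {\<tau>. cmod \<tau> = 1 \<and> poly (D0 \<alpha>) \<tau> = 0}"

lemma RT_finite: "cmod \<alpha> = 1 \<Longrightarrow> finite (RT \<alpha>)"
  unfolding RT_def by (rule roots_circle_finite[OF D0_nz])

lemma fbp_D0:
  assumes "cmod \<alpha> = 1"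
  shows "\<exists>c as. cmod c = 1 \<and> length as = n - card (RT \<alpha>) \<and> (\<forall>a\<in>set as. cmod a < 1) \<and>
    N0 \<alpha> * Pd as = smult c (Qn as * D0 \<alpha>)"
proof -
  obtain c as where ca: "cmod c = 1" "length as = n - card (RT \<alpha>)" "\<forall>a\<in>set as. cmod a < 1"
    "refl_poly n (D0 \<alpha>) * Pd as = smult c (Qn as * D0 \<alpha>)"
    using fbp_factor[OF D0_nz[OF assms] deg_D0 _ D0_nosq[OF assms]] D0_disc[OF assms] unfolding RT_def
    by blast
  have "N0 \<alpha> * Pd as = smult (\<alpha> * c) (Qn as * D0 \<alpha>)"
    by (simp add: N0_refl[OF assms] ca(4))
  moreover have "cmod (\<alpha> * c) = 1" using assms ca by (simp add: norm_mult)
  ultimately show ?thesis using ca by blast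
qed

abbreviation "gg \<alpha> \<equiv> gcd (N0 \<alpha>) (D0 \<alpha>)"
abbreviation "NN \<alpha> \<equiv> B_num n p1 p2 \<alpha>"
abbreviation "DD \<alpha> \<equiv> B_den n p1 p2 \<alpha>"

lemma reduced:
  assumes "cmod \<alpha> = 1"
  shows "gg \<alpha> \<noteq> 0" "N0 \<alpha> = NN \<alpha> * gg \<alpha>" "D0 \<alpha> = DD \<alpha> * gg \<alpha>" "DD \<alpha> \<noteq> 0"
proof -
  show g: "gg \<alpha> \<noteq> 0" using D0_nz[OF assms] by simp
  show "N0 \<alpha> = NN \<alpha> * gg \<alpha>" unfolding B_num_def by (simp add: dvd_div_mult_self)
  show d: "D0 \<alpha> = DD \<alpha> * gg \<alpha>" unfolding B_den_def by (simp add: dvd_div_mult_self)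
  show "DD \<alpha> \<noteq> 0" using d D0_nz[OF assms] by auto
qed

lemma fbp_red:
  assumes "cmod \<alpha> = 1"
  shows "\<exists>c as. cmod c = 1 \<and> length as = n - card (RT \<alpha>) \<and> (\<forall>a\<in>set as. cmod a < 1) \<and>
    NN \<alpha> * Pd as = smult c (Qn as * DD \<alpha>)"
proof -
  obtain c as where ca: "cmod c = 1" "length as = n - card (RT \<alpha>)" "\<forall>a\<in>set as. cmod a < 1"
    "N0 \<alpha> * Pd as = smult c (Qn as * D0 \<alpha>)"
    using fbp_D0[OF assms] by blast
  have "(NN \<alpha> * Pd as) * gg \<alpha> = (smult c (Qn as * DD \<alpha>)) * gg \<alpha>"
    using ca(4) reduced[OF assms] by (simp add: mult_ac)
  hence "NN \<alpha> * Pd as = smult c (Qn as * DD \<alpha>)"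
    using reduced(1)[OF assms] by (simp only: mult_cancel_right) simp
  thus ?thesis using ca by blast
qed

lemma fbp_main:
  assumes "cmod \<alpha> = 1"
  shows "fbp_of_degree (NN \<alpha>) (DD \<alpha>) (n - card (RT \<alpha>))"
proof -
  obtain c as where ca: "cmod c = 1" "length as = n - card (RT \<alpha>)" "\<forall>a\<in>set as. cmod a < 1"
    "NN \<alpha> * Pd as = smult c (Qn as * DD \<alpha>)"
    using fbp_red[OF assms] by blast
  have "poly (NN \<alpha>) z / poly (DD \<alpha>) z = c * (\<Prod>a\<leftarrow>as. (z - a) / (1 - cnj a * z))"
    if z: "poly (DD \<alpha>) z \<noteq> 0" "\<forall>a\<in>set as. 1 - cnj a * z \<noteq> 0" for z
  proof -
    have pz: "poly (Pd as) z \<noteq> 0" using z(2) by (auto simp: poly_Pd prod_list_zero_iff)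
    have "poly (NN \<alpha>) z * poly (Pd as) z = c * poly (Qn as) z * poly (DD \<alpha>) z"
      using arg_cong[OF ca(4), of "\<lambda>p. poly p z"] by simp
    hence e: "poly (NN \<alpha>) z * poly (Pd as) z = c * poly (Qn as) z * poly (DD \<alpha>) z" by simp
    have "poly (NN \<alpha>) z / poly (DD \<alpha>) z = c * (poly (Qn as) z / poly (Pd as) z)"
      using pz z(1) e by (simp add: field_simps)
    thus ?thesis unfolding prod_quot .
  qed
  thus ?thesis unfolding fbp_of_degree_def using reduced(4)[OF assms] ca by blast
qed

end


lemma inv_unimod: assumes "cmod b = 1" shows "1 / b = cnj b"
proof -
  have b: "b \<noteq> 0" using assms by auto
  have "b * cnj b = 1" by (rule unimod1[OF assms])
  hence "cnj b = 1 / b" using b by (simp add: eq_divide_eq mult.commute)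
  thus ?thesis by simp
qed

context rif begin

lemma D_circle:
  assumes a: "cmod \<alpha> = 1" and z: "cmod \<zeta> = 1"
  shows "poly (DD \<alpha>) \<zeta> \<noteq> 0"
proof
  assume d: "poly (DD \<alpha>) \<zeta> = 0"
  have "poly (D0 \<alpha>) \<zeta> = 0" using d reduced(3)[OF a] by (metis mult_zero_left poly_mult)
  moreover hence "poly (N0 \<alpha>) \<zeta> = 0" using N0_D0_circle[OF a z] by simp
  ultimately have "[:-\<zeta>, 1:] dvd gg \<alpha>" by (simp add: poly_eq_0_iff_dvd)
  moreover have "[:-\<zeta>, 1:] dvd DD \<alpha>" using d by (simp add: poly_eq_0_iff_dvd)
  ultimately have "[:-\<zeta>, 1:] * [:-\<zeta>, 1:] dvd DD \<alpha> * gg \<alpha>" by (rule mult_dvd_mono[rotated])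
  hence "[:-\<zeta>, 1:] ^ 2 dvd D0 \<alpha>" using reduced(3)[OF a] by (simp only: power2_eq_square)
  thus False using D0_nosq[OF a] z by blast
qed

lemma B_circle:
  assumes a: "cmod \<alpha> = 1" and z: "cmod \<zeta> = 1"
  shows "cmod (B_fun n p1 p2 \<alpha> \<zeta>) = 1"
proof -
  obtain c as where ca: "cmod c = 1" "\<forall>a\<in>set as. cmod a < 1"
    "NN \<alpha> * Pd as = smult c (Qn as * DD \<alpha>)"
    using fbp_red[OF a] by blast
  have "cmod (poly (NN \<alpha>) \<zeta>) * cmod (poly (Pd as) \<zeta>) = cmod (poly (Qn as) \<zeta>) * cmod (poly (DD \<alpha>) \<zeta>)"
    using arg_cong[OF ca(3), of "\<lambda>p. cmod (poly p \<zeta>)"] ca(1) by (simp add: norm_mult)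
  hence "cmod (poly (NN \<alpha>) \<zeta>) = cmod (poly (DD \<alpha>) \<zeta>)"
  proof -
    have "poly (Qn as) \<zeta> \<noteq> 0" using circle_Pd[OF z ca(2)] by (metis norm_eq_zero)
    thus ?thesis using \<open>cmod (poly (NN \<alpha>) \<zeta>) * _ = _\<close> circle_Pd[OF z ca(2)] by (simp add: mult.commute)
  qed
  thus ?thesis using D_circle[OF a z] by (simp add: B_fun_def norm_divide)
qed

lemma B_eq:
  assumes a: "cmod \<alpha> = 1" and d: "poly (D0 \<alpha>) \<zeta> \<noteq> 0"
  shows "B_fun n p1 p2 \<alpha> \<zeta> = poly (N0 \<alpha>) \<zeta> / poly (D0 \<alpha>) \<zeta>"
proof -
  have g: "poly (gg \<alpha>) \<zeta> \<noteq> 0" using d reduced(3)[OF a] by (metis mult_zero_right poly_mult)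
  have e1: "poly (N0 \<alpha>) \<zeta> = poly (NN \<alpha>) \<zeta> * poly (gg \<alpha>) \<zeta>"
    using reduced(2)[OF a] by (metis poly_mult)
  have e2: "poly (D0 \<alpha>) \<zeta> = poly (DD \<alpha>) \<zeta> * poly (gg \<alpha>) \<zeta>"
    using reduced(3)[OF a] by (metis poly_mult)
  show ?thesis unfolding B_fun_def e1 e2 using g by simp
qed

lemma C_char:
  "z \<in> C_set n p1 p2 \<alpha> \<longleftrightarrow> fst z \<in> circle \<and> snd z \<in> circle \<and>
     snd z * poly (N0 \<alpha>) (fst z) = poly (D0 \<alpha>) (fst z)"
  by (auto simp: C_set_def ptval_def pval_def B_num0_def B_den0_def algebra_simps)

lemma C_eq:
  assumes a: "cmod \<alpha> = 1"
  shows "C_set n p1 p2 \<alpha> = E_set n p1 p2 \<alpha> \<union> (\<Union>\<tau>\<in>RT \<alpha>. line_set \<tau>)"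
proof (intro equalityI subsetI)
  fix z assume "z \<in> C_set n p1 p2 \<alpha>"
  then obtain z1 z2 where zz: "z = (z1, z2)" "cmod z1 = 1" "cmod z2 = 1"
    "z2 * poly (N0 \<alpha>) z1 = poly (D0 \<alpha>) z1"
    by (cases z) (auto simp: C_char circle_def)
  show "z \<in> E_set n p1 p2 \<alpha> \<union> (\<Union>\<tau>\<in>RT \<alpha>. line_set \<tau>)"
  proof (cases "poly (D0 \<alpha>) z1 = 0")
    case True
    hence "z1 \<in> RT \<alpha>" using zz by (simp add: RT_def)
    thus ?thesis using zz by (auto simp: line_set_def circle_def)
  next
    case False
    have nN: "poly (N0 \<alpha>) z1 \<noteq> 0" using False N0_D0_circle[OF a zz(2)] by auto
    have B: "B_fun n p1 p2 \<alpha> z1 = poly (N0 \<alpha>) z1 / poly (D0 \<alpha>) z1" by (rule B_eq[OF a False])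
    have Bu: "cmod (B_fun n p1 p2 \<alpha> z1) = 1" by (rule B_circle[OF a zz(2)])
    have "z2 = poly (D0 \<alpha>) z1 / poly (N0 \<alpha>) z1" using zz(4) nN by (simp add: field_simps)
    also have "\<dots> = 1 / B_fun n p1 p2 \<alpha> z1" using B by simp
    also have "\<dots> = cnj (B_fun n p1 p2 \<alpha> z1)"
      by (rule inv_unimod[OF Bu])
    finally have "z = (z1, cnj (B_fun n p1 p2 \<alpha> z1))" using zz by simp
    thus ?thesis using zz(2) by (auto simp: E_set_def circle_def)
  qed
next
  fix z assume "z \<in> E_set n p1 p2 \<alpha> \<union> (\<Union>\<tau>\<in>RT \<alpha>. line_set \<tau>)"
  thus "z \<in> C_set n p1 p2 \<alpha>"
  proof
    assume "z \<in> E_set n p1 p2 \<alpha>"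
    then obtain \<zeta> where zz: "z = (\<zeta>, cnj (B_fun n p1 p2 \<alpha> \<zeta>))" "cmod \<zeta> = 1"
      by (auto simp: E_set_def circle_def)
    have Bu: "cmod (B_fun n p1 p2 \<alpha> \<zeta>) = 1" by (rule B_circle[OF a zz(2)])
    have "cnj (B_fun n p1 p2 \<alpha> \<zeta>) * poly (N0 \<alpha>) \<zeta> = poly (D0 \<alpha>) \<zeta>"
    proof (cases "poly (D0 \<alpha>) \<zeta> = 0")
      case True
      thus ?thesis using N0_D0_circle[OF a zz(2)] by simp
    next
      case False
      have nN: "poly (N0 \<alpha>) \<zeta> \<noteq> 0" using False N0_D0_circle[OF a zz(2)] by auto
      have "cnj (B_fun n p1 p2 \<alpha> \<zeta>) = 1 / B_fun n p1 p2 \<alpha> \<zeta>"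
        using inv_unimod[OF Bu] by simp
      thus ?thesis using B_eq[OF a False] nN False by simp
    qed
    thus ?thesis using zz Bu by (simp add: C_char circle_def)
  next
    assume "z \<in> (\<Union>\<tau>\<in>RT \<alpha>. line_set \<tau>)"
    then obtain \<tau> w where zz: "z = (\<tau>, w)" "\<tau> \<in> RT \<alpha>" "cmod w = 1"
      by (auto simp: line_set_def circle_def)
    have "poly (D0 \<alpha>) \<tau> = 0" "cmod \<tau> = 1" using zz by (auto simp: RT_def)
    moreover hence "poly (N0 \<alpha>) \<tau> = 0" using N0_D0_circle[OF a, of \<tau>] by simp
    ultimately show ?thesis using zz by (simp add: C_char circle_def)
  qed
qed

end


lemma cont_delta:
  fixes f :: "complex \<Rightarrow> complex"
  assumes "isCont f x" "e > 0"
  shows "\<exists>d>0. \<forall>y. cmod (y - x) < d \<longrightarrow> cmod (f y - f x) < e"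
  using assms unfolding continuous_at_eps_delta dist_norm by blast

context rif begin

lemma tz_p2:
  assumes "cmod \<tau> = 1" "poly p1 \<tau> + lam * poly p2 \<tau> = 0"
  shows "poly p2 \<tau> \<noteq> 0"
proof
  assume "poly p2 \<tau> = 0"
  hence "poly p1 \<tau> = 0" using assms by simp
  thus False using p1_closed[of \<tau>] assms by simp
qed

lemma tz_L:
  assumes "cmod \<tau> = 1" "cmod lam = 1" "poly p1 \<tau> + lam * poly p2 \<tau> = 0"
  shows "cmod (poly T1 \<tau> / poly p2 \<tau>) = 1"
proof -
  have "poly p1 \<tau> = - lam * poly p2 \<tau>" using assms(3) by (simp add: eq_neg_iff_add_eq_0)
  hence "cmod (poly p1 \<tau>) = cmod (poly p2 \<tau>)" using assms(2) by (simp add: norm_mult)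
  thus ?thesis using tz_p2[OF assms(1,3)] assms(1)
    by (simp add: refl_circle deg1 norm_divide norm_mult norm_power)
qed

lemma key_factor:
  assumes tz: "cmod \<tau> = 1" "cmod lam = 1" "poly p1 \<tau> + lam * poly p2 \<tau> = 0"
  defines "L \<equiv> poly T1 \<tau> / poly p2 \<tau>"
  shows "\<exists>N1 D1. N0 L = [:-\<tau>, 1:] * N1 \<and> D0 L = [:-\<tau>, 1:] * D1 \<and> lam * poly N1 \<tau> = poly D1 \<tau>"
proof -
  have Q: "poly p2 \<tau> \<noteq> 0" by (rule tz_p2[OF tz(1,3)])
  have L1: "cmod L = 1" unfolding L_def by (rule tz_L[OF tz])
  have N0t: "poly (N0 L) \<tau> = 0" using Q by (simp add: B_num0_def L_def)
  have D0t: "poly (D0 L) \<tau> = 0" using N0_D0_circle[OF L1 tz(1)] N0t by simp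
  obtain D1 where D1: "D0 L = [:-\<tau>, 1:] * D1" "poly D1 \<tau> \<noteq> 0"
     "Im (cnj (L * poly p1 \<tau>) * poly D1 \<tau> * \<tau>) = 0"
    using D0_simple[OF L1 tz(1) D0t] by blast
  have D1nz: "D1 \<noteq> 0" using D1(2) by auto
  have "degree (D0 L) = 1 + degree D1" unfolding D1(1) by (subst degree_mult_eq) (use D1nz in auto)
  hence degD1: "degree D1 \<le> n - 1" using deg_D0[of L] by arith
  have nn: "n = 1 + (n - 1)" using n by simp
  have tt: "\<tau> * cnj \<tau> = 1" by (rule unimod1[OF tz(1)])
  have lin: "[:1, - cnj \<tau>:] = smult (- cnj \<tau>) [:-\<tau>, 1:]" using tt by (simp add: mult.commute)
  define N1 where "N1 = smult (- L * cnj \<tau>) (refl_poly (n - 1) D1)"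
  have "refl_poly n (D0 L) = refl_poly (1 + (n - 1)) ([:-\<tau>, 1:] * D1)" using D1(1) nn by simp
  also have "\<dots> = refl_poly 1 [:-\<tau>, 1:] * refl_poly (n - 1) D1"
    by (rule refl_mult) (simp, rule degD1)
  finally have rD: "refl_poly n (D0 L) = [:1, - cnj \<tau>:] * refl_poly (n - 1) D1" by (simp only: refl_linear)
  have N1eq: "N0 L = [:-\<tau>, 1:] * N1"
    unfolding N0_refl[OF L1] rD lin N1_def by (rule poly_eq_nonzero) (simp add: algebra_simps)
  define t where "t = \<tau> ^ (n - 1)"
  define P where "P = poly p1 \<tau>"
  define d where "d = poly D1 \<tau>"
  have N1t: "poly N1 \<tau> = - L * cnj \<tau> * t * cnj d"
    unfolding N1_def t_def d_def using refl_circle[OF degD1 tz(1)] by simp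
  have taun: "\<tau> ^ n = \<tau> * t" unfolding t_def using n by (simp add: power_eq_if)
  have h1: "cnj L * cnj P * d * \<tau> = L * P * cnj d * cnj \<tau>"
  proof -
    have "cnj (L * P) * d * \<tau> = cnj (cnj (L * P) * d * \<tau>)"
      using D1(3) unfolding P_def d_def by (metis Reals_cnj_iff complex_is_Real_iff)
    thus ?thesis by simp
  qed
  have LQ: "L * poly p2 \<tau> = \<tau> ^ n * cnj P"
    unfolding L_def P_def using Q refl_circle[OF deg1 tz(1)] by simp
  have Pl: "P = - lam * poly p2 \<tau>" unfolding P_def using tz(3) by (simp add: eq_neg_iff_add_eq_0)
  have h2: "L * P = - lam * \<tau> * t * cnj P"
  proof -
    have "L * P = - lam * (L * poly p2 \<tau>)" by (subst Pl) (simp add: algebra_simps)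
    also have "\<dots> = - lam * (\<tau> ^ n * cnj P)" by (simp only: LQ)
    also have "\<dots> = - lam * \<tau> * t * cnj P" by (simp only: taun mult.assoc)
    finally show ?thesis .
  qed
  have LL: "L * cnj L = 1" by (rule unimod1[OF L1])
  have Pnz: "P \<noteq> 0" using Pl Q tz(2) by auto
  have fac: "cnj L * cnj P * \<tau> \<noteq> 0" using Pnz L1 tz(1) by auto
  have "(- lam * L * cnj \<tau> * t * cnj d) * (cnj L * cnj P * \<tau>) = - lam * t * cnj d * cnj P * ((L * cnj L) * (\<tau> * cnj \<tau>))"
    by (simp add: algebra_simps)
  also have "\<dots> = - lam * t * cnj d * cnj P" using LL tt by simp
  also have "\<dots> = (- lam * \<tau> * t * cnj P) * cnj d * cnj \<tau>" using tt by (simp add: algebra_simps)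
  also have "\<dots> = L * P * cnj d * cnj \<tau>" using h2 by simp
  also have "\<dots> = d * (cnj L * cnj P * \<tau>)" using h1 by (simp add: algebra_simps)
  finally have "(- lam * L * cnj \<tau> * t * cnj d) * (cnj L * cnj P * \<tau>) = d * (cnj L * cnj P * \<tau>)" .
  hence "- lam * L * cnj \<tau> * t * cnj d = d" using fac by (simp only: mult_cancel_right) simp
  hence "lam * poly N1 \<tau> = poly D1 \<tau>" unfolding N1t d_def by (simp add: algebra_simps)
  thus ?thesis using N1eq D1(1) by blast
qed

lemma p_gap:
  assumes tz: "cmod \<tau> = 1" "cmod lam = 1" "poly p1 \<tau> + lam * poly p2 \<tau> = 0" and c: "c > 0"
  shows "\<exists>s>0. \<exists>\<delta>>0. \<forall>z. cmod z < 1 \<longrightarrow> cmod (z - \<tau>) < \<delta> \<longrightarrow> cmod (z - \<tau>) < c * (1 - cmod z) \<longrightarrow>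
     s * (1 - cmod z) \<le> cmod (poly p1 z) ^ 2 - cmod (poly p2 z) ^ 2"
proof -
  obtain E1 where E1: "smult (cnj lam) p1 + p2 = [:-\<tau>, 1:] * E1"
    "Re (cnj (cnj lam * poly p1 \<tau>) * poly E1 \<tau> * \<tau>) < 0" "Im (cnj (cnj lam * poly p1 \<tau>) * poly E1 \<tau> * \<tau>) = 0"
    using E_simple[OF tz(2,1,3)] by blast
  define H where "H = (\<lambda>z. lam * cnj (poly p1 z) * poly E1 z)"
  define s0 where "s0 = - Re (H \<tau> * \<tau>)"
  have s0: "s0 > 0" using E1(2) by (simp add: s0_def H_def)
  have Hs: "H \<tau> * \<tau> = - of_real s0" using E1(3) by (simp add: s0_def H_def complex_eq_iff)
  have tt: "\<tau> * cnj \<tau> = 1" by (rule unimod1[OF tz(1)])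
  have ll: "lam * cnj lam = 1" by (rule unimod1[OF tz(2)])
  have ID: "cmod (poly p1 z) ^ 2 - cmod (poly p2 z) ^ 2 = 2 * Re (H z * (z - \<tau>)) - cmod (z - \<tau>) ^ 2 * cmod (poly E1 z) ^ 2" for z
  proof -
    have "poly p2 z = (z - \<tau>) * poly E1 z - cnj lam * poly p1 z"
      using arg_cong[OF E1(1), of "\<lambda>p. poly p z"] by (simp add: algebra_simps)
    hence "cmod (poly p2 z) = cmod (cnj lam * poly p1 z - (z - \<tau>) * poly E1 z)"
      by (metis minus_diff_eq norm_minus_cancel)
    hence "cmod (poly p2 z) ^ 2 = cmod (cnj lam * poly p1 z) ^ 2 - 2 * Re (cnj (cnj lam * poly p1 z) * ((z - \<tau>) * poly E1 z)) + cmod ((z - \<tau>) * poly E1 z) ^ 2"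
      by (simp only: norm_diff_sq)
    moreover have e2: "cmod (cnj lam * poly p1 z) = cmod (poly p1 z)" using tz(2) by (simp add: norm_mult)
    moreover have e1: "cnj (cnj lam * poly p1 z) * ((z - \<tau>) * poly E1 z) = H z * (z - \<tau>)"
      by (simp add: H_def algebra_simps)
    ultimately have "cmod (poly p2 z) ^ 2 = cmod (poly p1 z) ^ 2 - 2 * Re (H z * (z - \<tau>)) + cmod (z - \<tau>) ^ 2 * cmod (poly E1 z) ^ 2"
      by (simp only: norm_mult[of "z - \<tau>" "poly E1 z"] power_mult_distrib)
    thus ?thesis by linarith
  qed
  have cH: "isCont H \<tau>" unfolding H_def by (intro continuous_intros)
  have cE: "isCont (poly E1) \<tau>" by (intro continuous_intros)
  define eps where "eps = s0 / (4 * c)"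
  have eps: "eps > 0" using s0 c by (simp add: eps_def)
  obtain d1 where d1: "d1 > 0" "\<And>z. cmod (z - \<tau>) < d1 \<Longrightarrow> cmod (H z - H \<tau>) < eps"
    using cont_delta[OF cH eps] by blast
  obtain d2 where d2: "d2 > 0" "\<And>z. cmod (z - \<tau>) < d2 \<Longrightarrow> cmod (poly E1 z - poly E1 \<tau>) < 1"
    using cont_delta[OF cE, of 1] by auto
  define M where "M = cmod (poly E1 \<tau>) + 1"
  have M: "M \<ge> 1" by (simp add: M_def)
  define \<delta> where "\<delta> = min d1 (min d2 (s0 / (2 * c * M ^ 2)))"
  have \<delta>: "\<delta> > 0" using d1 d2 s0 c M by (simp add: \<delta>_def)
  show ?thesis
  proof (intro exI conjI allI impI)
    show "s0 > 0" "\<delta> > 0" by (fact s0, fact \<delta>)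
    fix z assume z: "cmod z < 1" "cmod (z - \<tau>) < \<delta>" "cmod (z - \<tau>) < c * (1 - cmod z)"
    define r where "r = cmod (z - \<tau>)"
    have r0: "r \<ge> 0" by (simp add: r_def)
    have zt: "z - \<tau> = \<tau> * (cnj \<tau> * z - 1)" using tt by (simp add: algebra_simps)
    have "Re (H \<tau> * (z - \<tau>)) = Re ((H \<tau> * \<tau>) * (cnj \<tau> * z - 1))" by (simp only: zt mult.assoc)
    also have "\<dots> = s0 * (1 - Re (cnj \<tau> * z))" unfolding Hs by (simp add: algebra_simps)
    also have "\<dots> \<ge> s0 * (1 - cmod z)"
    proof -
      have "Re (cnj \<tau> * z) \<le> cmod (cnj \<tau> * z)" by (rule complex_Re_le_cmod)
      also have "\<dots> = cmod z" using tz(1) by (simp add: norm_mult)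
      finally show ?thesis using s0 by (simp add: mult_left_mono)
    qed
    finally have A: "Re (H \<tau> * (z - \<tau>)) \<ge> s0 * (1 - cmod z)" .
    have "\<bar>Re ((H z - H \<tau>) * (z - \<tau>))\<bar> \<le> cmod ((H z - H \<tau>) * (z - \<tau>))" by (rule abs_Re_le_cmod)
    also have "\<dots> \<le> eps * r" using d1(2)[of z] z(2) r0 unfolding r_def \<delta>_def
      by (simp add: norm_mult mult_right_mono)
    finally have B: "\<bar>Re ((H z - H \<tau>) * (z - \<tau>))\<bar> \<le> eps * r" .
    have Ez: "cmod (poly E1 z) \<le> M"
      using d2(2)[of z] z(2) norm_triangle_ineq2[of "poly E1 z" "poly E1 \<tau>"] unfolding \<delta>_def M_def by simp
    have "r ^ 2 * cmod (poly E1 z) ^ 2 \<le> r * r * M ^ 2"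
    proof -
      have "cmod (poly E1 z) ^ 2 \<le> M ^ 2" using Ez by (simp add: power_mono)
      hence "r ^ 2 * cmod (poly E1 z) ^ 2 \<le> r ^ 2 * M ^ 2" by (simp add: mult_left_mono)
      thus ?thesis by (simp add: power2_eq_square)
    qed
    also have "\<dots> \<le> r * (s0 / (2 * c * M ^ 2)) * M ^ 2"
      using z(2) r0 unfolding r_def \<delta>_def by (intro mult_right_mono mult_left_mono) auto
    also have "\<dots> = r * s0 / (2 * c)" using M by (simp add: field_simps)
    finally have C: "r ^ 2 * cmod (poly E1 z) ^ 2 \<le> r * s0 / (2 * c)" .
    have Re_split: "Re (H z * (z - \<tau>)) = Re (H \<tau> * (z - \<tau>)) + Re ((H z - H \<tau>) * (z - \<tau>))"
      by (simp add: algebra_simps)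
    have rc: "r * s0 / c \<le> s0 * (1 - cmod z)"
    proof -
      have "r < c * (1 - cmod z)" using z(3) by (simp add: r_def)
      hence "r / c \<le> 1 - cmod z" using c by (simp add: divide_le_eq mult.commute)
      hence "s0 * (r / c) \<le> s0 * (1 - cmod z)" using s0 by (intro mult_left_mono) auto
      thus ?thesis by (simp add: mult.commute)
    qed
    have "eps * r = r * s0 / (4 * c)" by (simp add: eps_def)
    have "cmod (poly p1 z) ^ 2 - cmod (poly p2 z) ^ 2 \<ge> 2 * s0 * (1 - cmod z) - 2 * (eps * r) - r * s0 / (2 * c)"
      using ID[of z] A B C Re_split unfolding r_def by linarith
    moreover have "2 * (eps * r) + r * s0 / (2 * c) = r * s0 / c"
      by (simp add: eps_def field_simps)
    ultimately show "s0 * (1 - cmod z) \<le> cmod (poly p1 z) ^ 2 - cmod (poly p2 z) ^ 2"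
      using rc by linarith
  qed
qed

lemma pt_minus: "ptval n p1 p2 z - \<alpha> * pval p1 p2 z = snd z * poly (N0 \<alpha>) (fst z) - poly (D0 \<alpha>) (fst z)"
  by (simp add: ptval_def pval_def B_num0_def B_den0_def algebra_simps)

lemma nt_tendsto:
  assumes tz: "cmod \<tau> = 1" "cmod lam = 1" "poly p1 \<tau> + lam * poly p2 \<tau> = 0" and c: "c > 1"
  shows "(phi n p1 p2 \<longlongrightarrow> poly T1 \<tau> / poly p2 \<tau>) (at (\<tau>, lam) within nt_region c (\<tau>, lam))"
proof -
  define L where "L = poly T1 \<tau> / poly p2 \<tau>"
  define S where "S = nt_region c (\<tau>, lam)"
  obtain N1 D1 where ND: "N0 L = [:-\<tau>, 1:] * N1" "D0 L = [:-\<tau>, 1:] * D1" "lam * poly N1 \<tau> = poly D1 \<tau>"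
    using key_factor[OF tz] unfolding L_def by blast
  have c0: "c > 0" using c by simp
  obtain s \<delta> where sd: "s > 0" "\<delta> > 0" "\<And>z. cmod z < 1 \<Longrightarrow> cmod (z - \<tau>) < \<delta> \<Longrightarrow> cmod (z - \<tau>) < c * (1 - cmod z) \<Longrightarrow>
     s * (1 - cmod z) \<le> cmod (poly p1 z) ^ 2 - cmod (poly p2 z) ^ 2"
    using p_gap[OF tz c0] by blast
  have cp1: "isCont (poly p1) \<tau>" by (intro continuous_intros)
  obtain d3 where d3: "d3 > 0" "\<And>z. cmod (z - \<tau>) < d3 \<Longrightarrow> cmod (poly p1 z - poly p1 \<tau>) < 1"
    using cont_delta[OF cp1, of 1] by auto
  define M1 where "M1 = cmod (poly p1 \<tau>) + 1"
  have M1: "M1 > 0" by (simp add: M1_def add_nonneg_pos)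
  define \<kappa> where "\<kappa> = s / (2 * M1 * c)"
  have \<kappa>: "\<kappa> > 0" using sd M1 c0 by (simp add: \<kappa>_def)
  define W where "W = (\<lambda>z::complex \<times> complex. snd z * poly N1 (fst z) - poly D1 (fst z))"
  have ev: "eventually (\<lambda>z. norm (phi n p1 p2 z - L) \<le> norm (W z) / \<kappa>) (at (\<tau>, lam) within S)"
    unfolding eventually_at
  proof (intro exI[of _ "min \<delta> d3"] conjI ballI impI)
    show "min \<delta> d3 > 0" using sd d3 by simp
    fix z assume zS: "z \<in> S" and zd: "z \<noteq> (\<tau>, lam) \<and> dist z (\<tau>, lam) < min \<delta> d3"
    obtain z1 z2 where zz: "z = (z1, z2)" by (cases z)
    have z1: "cmod z1 < 1" "cmod z2 < 1" "cmod (\<tau> - z1) < c * (1 - cmod z1)"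
      using zS by (auto simp: S_def nt_region_def zz disc_def)
    have "cmod (z1 - \<tau>) \<le> dist z (\<tau>, lam)" using dist_fst_le[of z "(\<tau>, lam)"] by (simp add: zz dist_norm)
    hence zt: "cmod (z1 - \<tau>) < \<delta>" "cmod (z1 - \<tau>) < d3" using zd by auto
    have zt2: "cmod (z1 - \<tau>) < c * (1 - cmod z1)" using z1(3) by (simp add: norm_minus_commute)
    have pv: "pval p1 p2 z \<noteq> 0" using no_zeros[OF z1(1,2)] by (simp add: zz)
    have num: "ptval n p1 p2 z - L * pval p1 p2 z = (z1 - \<tau>) * W z"
      unfolding pt_minus ND(1,2) by (simp add: zz W_def algebra_simps)
    have phiL: "phi n p1 p2 z - L = (z1 - \<tau>) * W z / pval p1 p2 z"
      using pv num by (simp add: phi_def field_simps)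
    define A where "A = cmod (poly p1 z1)"
    define B where "B = cmod (poly p2 z1)"
    have A0: "A > 0" using p1_disc[OF z1(1)] by (simp add: A_def)
    have BA: "B \<le> A" using p2_le_disc[OF z1(1)] by (simp add: A_def B_def)
    have B0: "B \<ge> 0" by (simp add: B_def)
    have AM: "A \<le> M1"
      using d3(2)[OF zt(2)] norm_triangle_ineq2[of "poly p1 z1" "poly p1 \<tau>"] by (simp add: A_def M1_def)
    have gap: "s * (1 - cmod z1) \<le> A ^ 2 - B ^ 2" using sd(3)[OF z1(1) zt(1) zt2] by (simp add: A_def B_def)
    have pvA: "cmod (pval p1 p2 z) \<ge> A - B"
    proof -
      have "cmod (z2 * poly p2 z1) \<le> B" using z1(2) B0 by (simp add: norm_mult B_def mult_left_le_one_le)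
      moreover have "cmod (pval p1 p2 z) \<ge> cmod (poly p1 z1) - cmod (z2 * poly p2 z1)"
        unfolding zz pval_def by (simp add: norm_diff_ineq)
      ultimately show ?thesis by (simp add: A_def)
    qed
    have "A ^ 2 - B ^ 2 = (A - B) * (A + B)" by (simp add: power2_eq_square algebra_simps)
    also have "\<dots> \<le> (A - B) * (2 * M1)" using BA AM by (intro mult_left_mono) auto
    finally have "s * (1 - cmod z1) \<le> (A - B) * (2 * M1)" using gap by linarith
    hence "s * (1 - cmod z1) / (2 * M1) \<le> A - B" using M1 by (simp add: pos_divide_le_eq)
    moreover have "\<kappa> * cmod (z1 - \<tau>) \<le> s * (1 - cmod z1) / (2 * M1)"
    proof -
      have "cmod (z1 - \<tau>) / c \<le> 1 - cmod z1" using zt2 c0 by (simp add: divide_le_eq mult.commute)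
      hence "s / (2 * M1) * (cmod (z1 - \<tau>) / c) \<le> s / (2 * M1) * (1 - cmod z1)"
        using sd(1) M1 by (intro mult_left_mono) auto
      thus ?thesis by (simp add: \<kappa>_def field_simps)
    qed
    ultimately have low: "\<kappa> * cmod (z1 - \<tau>) \<le> cmod (pval p1 p2 z)" using pvA by linarith
    have "norm (phi n p1 p2 z - L) = cmod (z1 - \<tau>) * cmod (W z) / cmod (pval p1 p2 z)"
      by (simp add: phiL norm_mult norm_divide)
    also have "\<dots> \<le> cmod (W z) / \<kappa>"
    proof (cases "z1 = \<tau>")
      case True thus ?thesis using \<kappa> by simp
    next
      case False
      hence "cmod (z1 - \<tau>) > 0" by simp
      hence "\<kappa> * cmod (z1 - \<tau>) > 0" using \<kappa> by simp
      hence pp: "cmod (pval p1 p2 z) > 0" using low by linarith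
      have "cmod (z1 - \<tau>) * cmod (W z) * \<kappa> \<le> cmod (W z) * cmod (pval p1 p2 z)"
        using low mult_left_mono[OF low, of "cmod (W z)"] by (simp add: algebra_simps)
      thus ?thesis using pp \<kappa> by (simp add: divide_le_eq le_divide_eq field_simps)
    qed
    finally show "norm (phi n p1 p2 z - L) \<le> norm (W z) / \<kappa>" by simp
  qed
  have W0: "W (\<tau>, lam) = 0" using ND(3) by (simp add: W_def)
  have "continuous (at (\<tau>, lam) within S) W" unfolding W_def by (intro continuous_intros)
  hence "(W \<longlongrightarrow> 0) (at (\<tau>, lam) within S)" using W0 by (simp add: continuous_within)
  hence "((\<lambda>z. norm (W z) / \<kappa>) \<longlongrightarrow> 0) (at (\<tau>, lam) within S)"
    using tendsto_divide[OF tendsto_norm_zero[of W] tendsto_const[of \<kappa>]] \<kappa> by simp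
  hence "((\<lambda>z. phi n p1 p2 z - L) \<longlongrightarrow> 0) (at (\<tau>, lam) within S)"
    by (rule Lim_null_comparison[OF ev])
  thus ?thesis unfolding L_def S_def by (simp add: LIM_zero_iff)
qed

end


lemma nt_nontrivial:
  assumes c: "c > 1" and t: "cmod \<tau> = 1" "cmod lam = 1"
  shows "at (\<tau>, lam) within nt_region c (\<tau>, lam) \<noteq> bot"
proof -
  have "(\<tau>, lam) islimpt nt_region c (\<tau>, lam)"
    unfolding islimpt_approachable
  proof (intro allI impI)
    fix e :: real assume e: "e > 0"
    define r where "r = max (1/2) (1 - e / 4)"
    have r1: "r \<ge> 1 - e / 4" "r \<ge> 1/2" unfolding r_def by simp_all
    have r0: "r < 1" using e unfolding r_def by (simp add: max_def)
    have r: "r < 1" "r \<ge> 1/2" "1 - r \<le> e / 4" using r0 r1 by linarith+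
    have n1: "cmod (of_real r * \<tau>) = r" "cmod (of_real r * lam) = r" using t r by (auto simp: norm_mult)
    have d1: "cmod (\<tau> - of_real r * \<tau>) = 1 - r" "cmod (lam - of_real r * lam) = 1 - r"
    proof -
      have o: "cmod (complex_of_real (1 - r)) = 1 - r" using r0 by (subst norm_of_real) simp
      have e1: "\<tau> - of_real r * \<tau> = of_real (1 - r) * \<tau>" by (simp add: algebra_simps)
      show "cmod (\<tau> - of_real r * \<tau>) = 1 - r" unfolding e1 norm_mult o using t by simp
      have e2: "lam - of_real r * lam = of_real (1 - r) * lam" by (simp add: algebra_simps)
      show "cmod (lam - of_real r * lam) = 1 - r" unfolding e2 norm_mult o using t by simp
    qed
    have cr: "1 - r < c * (1 - r)" using c r by simp
    show "\<exists>x'\<in>nt_region c (\<tau>, lam). x' \<noteq> (\<tau>, lam) \<and> dist x' (\<tau>, lam) < e"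
    proof (intro bexI[of _ "(of_real r * \<tau>, of_real r * lam)"] conjI)
      show "(of_real r * \<tau>, of_real r * lam) \<in> nt_region c (\<tau>, lam)"
        using n1 d1 r cr by (simp add: nt_region_def disc_def)
      show "(of_real r * \<tau>, of_real r * lam) \<noteq> (\<tau>, lam)" using n1 t r by auto
      have "dist (of_real r * \<tau>, of_real r * lam) (\<tau>, lam) = sqrt ((1 - r)^2 + (1 - r)^2)"
      proof -
        have a: "dist (of_real r * \<tau>) \<tau> = 1 - r" using d1(1) by (simp add: dist_norm norm_minus_commute)
        have b: "dist (of_real r * lam) lam = 1 - r" using d1(2) by (simp add: dist_norm norm_minus_commute)
        show ?thesis by (simp only: dist_Pair_Pair a b)
      qed
      also have "\<dots> \<le> (1 - r) + (1 - r)" using r by (intro sqrt_sum_squares_le_sum) auto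
      also have "\<dots> < e" using r e by simp
      finally show "dist (of_real r * \<tau>, of_real r * lam) (\<tau>, lam) < e" .
    qed
  qed
  thus ?thesis by (simp add: trivial_limit_within)
qed

context rif begin

lemma nt_lim_value:
  assumes tz: "cmod \<tau> = 1" "cmod lam = 1" "poly p1 \<tau> + lam * poly p2 \<tau> = 0"
  shows "nt_lim (phi n p1 p2) (\<tau>, lam) = poly T1 \<tau> / poly p2 \<tau>"
  unfolding nt_lim_def
proof (rule the_equality)
  show "has_nt_limit (phi n p1 p2) (\<tau>, lam) (poly T1 \<tau> / poly p2 \<tau>)"
    unfolding has_nt_limit_def using nt_tendsto[OF tz] by blast
  fix L' assume "has_nt_limit (phi n p1 p2) (\<tau>, lam) L'"
  hence "(phi n p1 p2 \<longlongrightarrow> L') (at (\<tau>, lam) within nt_region 2 (\<tau>, lam))"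
    unfolding has_nt_limit_def by simp
  moreover have "(phi n p1 p2 \<longlongrightarrow> poly T1 \<tau> / poly p2 \<tau>) (at (\<tau>, lam) within nt_region 2 (\<tau>, lam))"
    using nt_tendsto[OF tz, of 2] by simp
  ultimately show "L' = poly T1 \<tau> / poly p2 \<tau>"
    using tendsto_unique[OF nt_nontrivial[of 2, OF _ tz(1,2)]] by simp
qed

lemma exc_char:
  assumes a: "cmod \<alpha> = 1"
  shows "fst ` exc_points n p1 p2 \<alpha> = RT \<alpha>" "inj_on fst (exc_points n p1 p2 \<alpha>)"
proof -
  have mem: "z \<in> exc_points n p1 p2 \<alpha> \<longleftrightarrow> cmod (fst z) = 1 \<and> cmod (snd z) = 1 \<and>
      poly p1 (fst z) + snd z * poly p2 (fst z) = 0 \<and> poly T1 (fst z) / poly p2 (fst z) = \<alpha>" for z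
  proof -
    obtain t l where z: "z = (t, l)" by (cases z)
    show ?thesis
      unfolding z exc_points_def torus_zeros_def circle_def pval_def
      using nt_lim_value[of t l] by auto
  qed
  show "inj_on fst (exc_points n p1 p2 \<alpha>)"
  proof (rule inj_onI)
    fix x y assume x: "x \<in> exc_points n p1 p2 \<alpha>" and y: "y \<in> exc_points n p1 p2 \<alpha>" and e: "fst x = fst y"
    have "poly p2 (fst x) \<noteq> 0" using x mem tz_p2 by blast
    moreover have "poly p1 (fst x) + snd x * poly p2 (fst x) = 0" "poly p1 (fst x) + snd y * poly p2 (fst x) = 0"
      using x y e mem by auto
    ultimately have "snd x = snd y" by (metis add_left_cancel mult_cancel_right)
    thus "x = y" using e by (simp add: prod_eq_iff)
  qed
  show "fst ` exc_points n p1 p2 \<alpha> = RT \<alpha>"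
  proof (intro equalityI subsetI)
    fix t assume "t \<in> fst ` exc_points n p1 p2 \<alpha>"
    then obtain l where tl: "(t, l) \<in> exc_points n p1 p2 \<alpha>" by force
    hence h: "cmod t = 1" "cmod l = 1" "poly p1 t + l * poly p2 t = 0" "poly T1 t / poly p2 t = \<alpha>"
      using mem[of "(t, l)"] by auto
    have "poly p2 t \<noteq> 0" by (rule tz_p2[OF h(1,3)])
    hence "poly (N0 \<alpha>) t = 0" using h(4) by (simp add: B_num0_def field_simps)
    hence "poly (D0 \<alpha>) t = 0" using N0_D0_circle[OF a h(1)] by simp
    thus "t \<in> RT \<alpha>" using h(1) by (simp add: RT_def)
  next
    fix t assume "t \<in> RT \<alpha>"
    hence t: "cmod t = 1" "poly (D0 \<alpha>) t = 0" by (auto simp: RT_def)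
    have N: "poly (N0 \<alpha>) t = 0" using N0_D0_circle[OF a t(1)] t(2) by simp
    hence T1t: "poly T1 t = \<alpha> * poly p2 t" by (simp add: B_num0_def)
    have nT: "cmod (poly T1 t) = cmod (poly p1 t)" using t(1) by (simp add: refl_circle deg1 norm_mult norm_power)
    have p2t: "poly p2 t \<noteq> 0"
    proof
      assume "poly p2 t = 0"
      hence "poly p1 t = 0" using T1t nT by simp
      thus False using p1_closed[of t] t(1) by simp
    qed
    define l where "l = - poly p1 t / poly p2 t"
    have l1: "cmod l = 1" using nT T1t a p2t p1_closed[of t] t(1) by (simp add: l_def norm_divide norm_mult)
    have l0: "poly p1 t + l * poly p2 t = 0" using p2t by (simp add: l_def)
    have "(t, l) \<in> exc_points n p1 p2 \<alpha>"
      using mem[of "(t, l)"] t(1) l1 l0 T1t p2t by simp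
    thus "t \<in> fst ` exc_points n p1 p2 \<alpha>" by force
  qed
qed

end

theorem theorem3p3:
  fixes n :: nat and p1 p2 :: "complex poly" and \<alpha> :: complex
  assumes n: "n \<ge> 1"
    and deg_p: "degree p1 \<le> n" "degree p2 \<le> n"
    and no_zeros: "\<And>z1 z2. cmod z1 < 1 \<Longrightarrow> cmod z2 < 1 \<Longrightarrow> pval p1 p2 (z1, z2) \<noteq> 0"
    and deg_pt: "refl_poly n p1 \<noteq> 0"
       "max (degree (refl_poly n p1)) (degree (refl_poly n p2)) = n"
    and coprime: "\<And>q. q dvd bipoly p1 p2 \<Longrightarrow> q dvd bipoly_tilde n p1 p2 \<Longrightarrow> is_unit q"
    and alpha: "cmod \<alpha> = 1"
  shows "is_fbp (B_num n p1 p2 \<alpha>) (B_den n p1 p2 \<alpha>)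
     \<and> (\<not> exceptional n p1 p2 \<alpha> \<longrightarrow>
          fbp_of_degree (B_num n p1 p2 \<alpha>) (B_den n p1 p2 \<alpha>) n
          \<and> C_set n p1 p2 \<alpha> = E_set n p1 p2 \<alpha>)
     \<and> (exceptional n p1 p2 \<alpha> \<longrightarrow>
          fbp_of_degree (B_num n p1 p2 \<alpha>) (B_den n p1 p2 \<alpha>) (n - card (exc_points n p1 p2 \<alpha>))
          \<and> C_set n p1 p2 \<alpha> = E_set n p1 p2 \<alpha> \<union> (\<Union>\<zeta>\<in>exc_points n p1 p2 \<alpha>. line_set (fst \<zeta>)))"
proof -
  interpret rif n p1 p2
    by unfold_locales (use assms in auto)
  have F: "fbp_of_degree (B_num n p1 p2 \<alpha>) (B_den n p1 p2 \<alpha>) (n - card (RT \<alpha>))"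
    by (rule fbp_main[OF alpha])
  have C: "C_set n p1 p2 \<alpha> = E_set n p1 p2 \<alpha> \<union> (\<Union>\<tau>\<in>RT \<alpha>. line_set \<tau>)"
    by (rule C_eq[OF alpha])
  have img: "fst ` exc_points n p1 p2 \<alpha> = RT \<alpha>" and inj: "inj_on fst (exc_points n p1 p2 \<alpha>)"
    using exc_char[OF alpha] by auto
  have card: "card (exc_points n p1 p2 \<alpha>) = card (RT \<alpha>)"
    using card_image[OF inj] img by simp
  have U: "(\<Union>\<zeta>\<in>exc_points n p1 p2 \<alpha>. line_set (fst \<zeta>)) = (\<Union>\<tau>\<in>RT \<alpha>. line_set \<tau>)"
    unfolding img[symmetric] by blast
  show ?thesis
  proof (intro conjI impI)
    show "is_fbp (B_num n p1 p2 \<alpha>) (B_den n p1 p2 \<alpha>)" using F by (auto simp: is_fbp_def)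
  next
    assume ne: "\<not> exceptional n p1 p2 \<alpha>"
    hence "RT \<alpha> = {}" using img by (simp add: exceptional_def)
    thus "fbp_of_degree (B_num n p1 p2 \<alpha>) (B_den n p1 p2 \<alpha>) n" using F by simp
    show "C_set n p1 p2 \<alpha> = E_set n p1 p2 \<alpha>" using C \<open>RT \<alpha> = {}\<close> by simp
  next
    assume "exceptional n p1 p2 \<alpha>"
    show "fbp_of_degree (B_num n p1 p2 \<alpha>) (B_den n p1 p2 \<alpha>) (n - card (exc_points n p1 p2 \<alpha>))"
      using F card by simp
    show "C_set n p1 p2 \<alpha> = E_set n p1 p2 \<alpha> \<union> (\<Union>\<zeta>\<in>exc_points n p1 p2 \<alpha>. line_set (fst \<zeta>))"
      using C U by simp
  qed
qed


end
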